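(* For homogeneous $v_1,\dots,v_n\in V$, writing $Z=Z_V^{(g)}(v_1,y_1;\dots;v_n,y_n)$, \begin{enumerate} \item $\big(\mathcal L_{-1}-\sum_{k=1}^n\partial_{y_k}\big)Z=0$; \item $\big(\mathcal L_0-\sum_{k=1}^ny_k\partial_{y_k}-\sum_{k=1}^n\mathrm{wt}(v_k)\big)Z=0$; \item $\big(\mathcal L_1-\sum_{k=1}^ny_k^2\partial_{y_k}-\sum_{k=1}^n2y_k\,\mathrm{wt}(v_k)\big)Z=\sum_{k=1}^nZ_V^{(g)}(v_1,y_1;\dots;L(1)v_k,y_k;\dots;v_n,y_n)$, \end{enumerate} where $\mathcal L_{-1}=-\sum_{a\in\mathcal I}\partial_{w_a}$, $\mathcal L_0=-\sum_{a\in\mathcal I}w_a\partial_{w_a}-2\sum_{a\in\mathcal I_+}\rho_a\partial_{\rho_a}$, $\mathcal L_1=-\sum_{a\in\mathcal I}(w_a^2+\rho_{|a|})\partial_{w_a}-2\sum_{a\in\mathcal I_+}(w_a+w_{-a})\rho_a\partial_{\rho_a}$.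
   Context: $V=\bigoplus_{n\ge0}V_n$ is a simple, self-dual vertex operator algebra of strong CFT type ($V_0=\mathbb C\mathbb1$, $L(1)V_1=0$) with Virasoro modes $L(n)$ and $\mathrm{wt}(v)=n$ for $v\in V_n$. $\langle\cdot,\cdot\rangle_1$ is the unique invariant bilinear form with $\langle\mathbb1,\mathbb1\rangle_1=1$. Genus zero $n$-point function: $Z^{(0)}(v_1,y_1;\dots;v_n,y_n)=\langle\mathbb1,Y(v_1,y_1)\cdots Y(v_n,y_n)\mathbb1\rangle_1$. Let $g\ge1$, $\mathcal I=\{\pm1,\dots,\pm g\}$, $\mathcal I_+=\{1,\dots,g\}$, formal variables $w_a$ ($a\in\mathcal I$), $\rho_a$ ($a\in\mathcal I_+$). For each $a\in\mathcal I_+$ let $b_a$ run over a homogeneous basis of $V$, $\bar b_a$ the dual basis for $\langle\cdot,\cdot\rangle_1$, and $b_{-a}=\rho_a^{\mathrm{wt}(b_a)}\bar b_a$. The genus $g$ formal $n$-point function is $Z_V^{(g)}(v_1,y_1;\dots;v_n,y_n)=\sum_{b_1,\dots,b_g}Z^{(0)}(v_1,y_1;\dots;v_n,y_n;b_{-1},w_{-1};b_1,w_1;\dots;b_{-g},w_{-g};b_g,w_g)$ (formal power series in the $\rho_a$). *)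

theory Defs
  imports Complex_Main
begin

text \<open>
A vertex operator algebra is given by a complex vector space 'v (scalar multiplication
scale), the modes  Y u m x = u(m) x  (so Y(u,z) = sum over m of u(m) z^(-m-1)),
the vacuum vac, the conformal vector om and the central charge c.
\<close>

definition Lv :: "('v \<Rightarrow> int \<Rightarrow> 'v \<Rightarrow> 'v) \<Rightarrow> 'v \<Rightarrow> int \<Rightarrow> 'v \<Rightarrow> 'v" where
  "Lv Y om n = Y om (n + 1)"

definition Vgr :: "(complex \<Rightarrow> 'v \<Rightarrow> 'v) \<Rightarrow> ('v \<Rightarrow> int \<Rightarrow> 'v \<Rightarrow> 'v) \<Rightarrow> 'v \<Rightarrow> nat \<Rightarrow> 'v set" where
  "Vgr scale Y om n = {x. Lv Y om 0 x = scale (of_nat n) x}"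

definition is_VOA ::
  "(complex \<Rightarrow> 'v::ab_group_add \<Rightarrow> 'v) \<Rightarrow> ('v \<Rightarrow> int \<Rightarrow> 'v \<Rightarrow> 'v) \<Rightarrow> 'v \<Rightarrow> 'v \<Rightarrow> complex \<Rightarrow> bool" where
  "is_VOA scale Y vac om c \<longleftrightarrow>
     vector_space scale
   \<comment> \<open>bilinearity of the modes\<close>
   \<and> (\<forall>u m. Vector_Spaces.linear scale scale (Y u m))
   \<and> (\<forall>u u' m x. Y (u + u') m x = Y u m x + Y u' m x)
   \<and> (\<forall>a u m x. Y (scale a u) m x = scale a (Y u m x))
   \<comment> \<open>truncation\<close>
   \<and> (\<forall>u x. \<exists>N. \<forall>m\<ge>N. Y u m x = 0)
   \<comment> \<open>vacuum and creation properties\<close>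
   \<and> (\<forall>m x. Y vac m x = (if m = -1 then x else 0))
   \<and> (\<forall>u m. m \<ge> 0 \<longrightarrow> Y u m vac = 0)
   \<and> (\<forall>u. Y u (-1) vac = u)
   \<comment> \<open>Jacobi (Borcherds) identity, written with finite sums beyond which all terms vanish\<close>
   \<and> (\<forall>u v w p q r N. (\<forall>i\<ge>N. Y u (r + int i) v = 0 \<and> Y v (q + int i) w = 0 \<and> Y u (p + int i) w = 0) \<longrightarrow>
        (\<Sum>i<N. scale (of_int p gchoose i) (Y (Y u (r + int i) v) (p + q - int i) w))
      = (\<Sum>i<N. scale ((-1)^i * (of_int r gchoose i))
              (Y u (p + r - int i) (Y v (q + int i) w)
               - scale ((-1) powi r) (Y v (q + r - int i) (Y u (p + int i) w)))))
   \<comment> \<open>Virasoro relations with central charge c\<close>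
   \<and> (\<forall>m n x. Lv Y om m (Lv Y om n x) - Lv Y om n (Lv Y om m x)
        = scale (of_int (m - n)) (Lv Y om (m + n) x)
          + scale (if m + n = 0 then (of_int (m^3 - m) / 12) * c else 0) x)
   \<comment> \<open>L(-1)-derivative property: Y(L(-1)u,z) = d/dz Y(u,z)\<close>
   \<and> (\<forall>u m x. Y (Lv Y om (-1) u) m x = scale (- of_int m) (Y u (m - 1) x))
   \<comment> \<open>grading by L(0): V is the direct sum of the V_n (n in nat), each finite-dimensional\<close>
   \<and> (\<forall>x. \<exists>F xs. finite F \<and> (\<forall>n\<in>F. xs n \<in> Vgr scale Y om n) \<and> x = (\<Sum>n\<in>F. xs n))
   \<and> (\<forall>n. \<exists>B. finite B \<and> B \<subseteq> Vgr scale Y om n \<and> Vgr scale Y om n \<subseteq> module.span scale B)"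

definition strong_CFT_type :: "(complex \<Rightarrow> 'v::ab_group_add \<Rightarrow> 'v) \<Rightarrow> ('v \<Rightarrow> int \<Rightarrow> 'v \<Rightarrow> 'v) \<Rightarrow> 'v \<Rightarrow> 'v \<Rightarrow> bool" where
  "strong_CFT_type scale Y vac om \<longleftrightarrow>
     Vgr scale Y om 0 = {scale a vac | a. True}
   \<and> (\<forall>x \<in> Vgr scale Y om 1. Lv Y om 1 x = 0)"

definition simple_VOA :: "(complex \<Rightarrow> 'v::ab_group_add \<Rightarrow> 'v) \<Rightarrow> ('v \<Rightarrow> int \<Rightarrow> 'v \<Rightarrow> 'v) \<Rightarrow> bool" where
  "simple_VOA scale Y \<longleftrightarrow>
     (\<forall>I. module.subspace scale I \<and> (\<forall>u m x. x \<in> I \<longrightarrow> Y u m x \<in> I) \<longrightarrow> I = {0} \<or> I = UNIV)"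

definition bilinear_form :: "(complex \<Rightarrow> 'v::ab_group_add \<Rightarrow> 'v) \<Rightarrow> ('v \<Rightarrow> 'v \<Rightarrow> complex) \<Rightarrow> bool" where
  "bilinear_form scale B \<longleftrightarrow>
     (\<forall>x y z. B (x + y) z = B x z + B y z \<and> B z (x + y) = B z x + B z y)
   \<and> (\<forall>a x y. B (scale a x) y = a * B x y \<and> B x (scale a y) = a * B x y)"

text \<open>Invariance: <Y(u,z)a,b> = <a, Y(e^{zL(1)} (-z^{-2})^{L(0)} u, z^{-1}) b>, in modes
for homogeneous u of weight k.\<close>
definition invariant_form ::
  "(complex \<Rightarrow> 'v::ab_group_add \<Rightarrow> 'v) \<Rightarrow> ('v \<Rightarrow> int \<Rightarrow> 'v \<Rightarrow> 'v) \<Rightarrow> 'v \<Rightarrow> ('v \<Rightarrow> 'v \<Rightarrow> complex) \<Rightarrow> bool" where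
  "invariant_form scale Y om B \<longleftrightarrow>
     bilinear_form scale B
   \<and> (\<forall>k u m a b. u \<in> Vgr scale Y om k \<longrightarrow>
        B (Y u m a) b = (-1)^k * (\<Sum>j\<le>k. (1 / fact j) *
            B a (Y ((Lv Y om 1 ^^ j) u) (2 * int k - m - int j - 2) b)))"

text \<open>Self-dual (V isomorphic to its contragredient V'): equivalently, V carries a
nondegenerate invariant bilinear form.\<close>
definition self_dual :: "(complex \<Rightarrow> 'v::ab_group_add \<Rightarrow> 'v) \<Rightarrow> ('v \<Rightarrow> int \<Rightarrow> 'v \<Rightarrow> 'v) \<Rightarrow> 'v \<Rightarrow> bool" where
  "self_dual scale Y om \<longleftrightarrow>
     (\<exists>B. invariant_form scale Y om B \<and> (\<forall>x. x \<noteq> 0 \<longrightarrow> (\<exists>y. B x y \<noteq> 0)))"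

definition hom_dual_bases ::
  "(complex \<Rightarrow> 'v::ab_group_add \<Rightarrow> 'v) \<Rightarrow> ('v \<Rightarrow> int \<Rightarrow> 'v \<Rightarrow> 'v) \<Rightarrow> 'v \<Rightarrow> ('v \<Rightarrow> 'v \<Rightarrow> complex)
     \<Rightarrow> (nat \<Rightarrow> 'v list) \<Rightarrow> (nat \<Rightarrow> 'v list) \<Rightarrow> bool" where
  "hom_dual_bases scale Y om B bas dual \<longleftrightarrow>
     (\<forall>n. distinct (bas n) \<and> set (bas n) \<subseteq> Vgr scale Y om n
        \<and> \<not> module.dependent scale (set (bas n))
        \<and> Vgr scale Y om n \<subseteq> module.span scale (set (bas n))
        \<and> length (dual n) = length (bas n) \<and> set (dual n) \<subseteq> Vgr scale Y om n
        \<and> (\<forall>i<length (bas n). \<forall>j<length (bas n). B (bas n ! i) (dual n ! j) = (if i = j then 1 else 0)))"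

text \<open>Genus zero formal N-point function <vac, Y(u_1,z_1)...Y(u_N,z_N) vac>:
the coefficient of z_1^{e_1}...z_N^{e_N} is <vac, u_1(-e_1-1) ... u_N(-e_N-1) vac>.\<close>
definition Z0 :: "('v \<Rightarrow> int \<Rightarrow> 'v \<Rightarrow> 'v) \<Rightarrow> ('v \<Rightarrow> 'v \<Rightarrow> complex) \<Rightarrow> 'v \<Rightarrow> 'v list \<Rightarrow> int list \<Rightarrow> complex" where
  "Z0 Y B vac us es = B vac (foldr (\<lambda>(u, e) x. Y u (- e - 1) x) (zip us es) vac)"

type_synonym fser = "int list \<Rightarrow> int list \<Rightarrow> nat list \<Rightarrow> complex"

text \<open>Genus g formal n-point function, as a formal series in y_1..y_n (exponent list ey),
w_{-1}, w_1, ..., w_{-g}, w_g (exponent list ew, in this order: position 2i is w_{-(i+1)},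
position 2i+1 is w_{i+1}) and rho_1..rho_g (exponent list ks).  The coefficient of
rho^ks collects the basis vectors b_a of weight ks_a, with b_{-a} = rho_a^{wt b_a} (dual b_a).\<close>
definition Zg :: "('v \<Rightarrow> int \<Rightarrow> 'v \<Rightarrow> 'v) \<Rightarrow> ('v \<Rightarrow> 'v \<Rightarrow> complex) \<Rightarrow> 'v
     \<Rightarrow> (nat \<Rightarrow> 'v list) \<Rightarrow> (nat \<Rightarrow> 'v list) \<Rightarrow> nat \<Rightarrow> 'v list \<Rightarrow> fser" where
  "Zg Y B vac bas dual g vs = (\<lambda>ey ew ks.
     \<Sum>js \<in> listset (map (\<lambda>i. {..<length (bas (ks ! i))}) [0..<g]).
        Z0 Y B vac (vs @ concat (map (\<lambda>i. [dual (ks ! i) ! (js ! i), bas (ks ! i) ! (js ! i)]) [0..<g]))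
                   (ey @ ew))"

definition dy :: "nat \<Rightarrow> fser \<Rightarrow> fser" where
  "dy k F = (\<lambda>ey ew ks. of_int (ey ! k + 1) * F (ey[k := ey ! k + 1]) ew ks)"
definition ydy :: "nat \<Rightarrow> fser \<Rightarrow> fser" where
  "ydy k F = (\<lambda>ey ew ks. of_int (ey ! k) * F ey ew ks)"
definition y2dy :: "nat \<Rightarrow> fser \<Rightarrow> fser" where
  "y2dy k F = (\<lambda>ey ew ks. of_int (ey ! k - 1) * F (ey[k := ey ! k - 1]) ew ks)"
definition ymul :: "nat \<Rightarrow> fser \<Rightarrow> fser" where
  "ymul k F = (\<lambda>ey ew ks. F (ey[k := ey ! k - 1]) ew ks)"
definition dw :: "nat \<Rightarrow> fser \<Rightarrow> fser" where
  "dw j F = (\<lambda>ey ew ks. of_int (ew ! j + 1) * F ey (ew[j := ew ! j + 1]) ks)"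
definition wdw :: "nat \<Rightarrow> fser \<Rightarrow> fser" where
  "wdw j F = (\<lambda>ey ew ks. of_int (ew ! j) * F ey ew ks)"
definition w2dw :: "nat \<Rightarrow> fser \<Rightarrow> fser" where
  "w2dw j F = (\<lambda>ey ew ks. of_int (ew ! j - 1) * F ey (ew[j := ew ! j - 1]) ks)"
definition wmul :: "nat \<Rightarrow> fser \<Rightarrow> fser" where
  "wmul j F = (\<lambda>ey ew ks. F ey (ew[j := ew ! j - 1]) ks)"
definition rhomul :: "nat \<Rightarrow> fser \<Rightarrow> fser" where  \<comment> \<open>multiplication by rho_(i+1)\<close>
  "rhomul i F = (\<lambda>ey ew ks. if ks ! i = 0 then 0 else F ey ew (ks[i := ks ! i - 1]))"
definition rhodrho :: "nat \<Rightarrow> fser \<Rightarrow> fser" where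
  "rhodrho i F = (\<lambda>ey ew ks. of_nat (ks ! i) * F ey ew ks)"

text \<open>The operators L_{-1}, L_0, L_1 (index a in I corresponds to positions j<2g of ew,
|a| to j div 2).\<close>
definition Lm1 :: "nat \<Rightarrow> fser \<Rightarrow> fser" where
  "Lm1 g F = (\<lambda>ey ew ks. - (\<Sum>j<2*g. dw j F ey ew ks))"
definition L0op :: "nat \<Rightarrow> fser \<Rightarrow> fser" where
  "L0op g F = (\<lambda>ey ew ks. - (\<Sum>j<2*g. wdw j F ey ew ks) - 2 * (\<Sum>i<g. rhodrho i F ey ew ks))"
definition L1op :: "nat \<Rightarrow> fser \<Rightarrow> fser" where
  "L1op g F = (\<lambda>ey ew ks.
      - (\<Sum>j<2*g. w2dw j F ey ew ks + rhomul (j div 2) (dw j F) ey ew ks)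
      - 2 * (\<Sum>i<g. wmul (2*i) (rhodrho i F) ey ew ks + wmul (2*i+1) (rhodrho i F) ey ew ks))"

end

theory Submission
  imports Defs
begin

locale voactx =
  fixes scale :: "complex \<Rightarrow> 'v::ab_group_add \<Rightarrow> 'v"
    and Y :: "'v \<Rightarrow> int \<Rightarrow> 'v \<Rightarrow> 'v"
    and vac om :: 'v and c :: complex
    and B :: "'v \<Rightarrow> 'v \<Rightarrow> complex"
    and bas dual :: "nat \<Rightarrow> 'v list"
  assumes voa: "is_VOA scale Y vac om c"
    and cft: "strong_CFT_type scale Y vac om"
    and form: "invariant_form scale Y om B"
    and bases: "hom_dual_bases scale Y om B bas dual"
begin

lemma vsp: "vector_space scale" using voa by (simp add: is_VOA_def)

sublocale vs: vector_space scale by (rule vsp)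

lemma linY: "Vector_Spaces.linear scale scale (Y u m)" using voa by (simp add: is_VOA_def)

lemma linYh: "module_hom scale scale (Y u m)" using linY module_hom_iff_linear by blast

lemma Y_add: "Y u m (x + y) = Y u m x + Y u m y" using module_hom.add[OF linYh] .
lemma Y_scale: "Y u m (scale a x) = scale a (Y u m x)" using module_hom.scale[OF linYh] .
lemma Y_zero[simp]: "Y u m 0 = 0" using module_hom.zero[OF linYh] .
lemma Y_sum: "Y u m (sum f A) = (\<Sum>a\<in>A. Y u m (f a))" using module_hom.sum[OF linYh] .
lemma Y_diff: "Y u m (x - y) = Y u m x - Y u m y" using module_hom.diff[OF linYh] .

lemma Yu_add: "Y (u + u') m x = Y u m x + Y u' m x" using voa by (simp add: is_VOA_def)
lemma Yu_scale: "Y (scale a u) m x = scale a (Y u m x)" using voa by (simp add: is_VOA_def)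
lemma Yu_zero[simp]: "Y 0 m x = 0"
  using Yu_scale[of 0 0 m x] by simp
lemma Yu_sum: "Y (sum f A) m x = (\<Sum>a\<in>A. Y (f a) m x)"
  by (induction A rule: infinite_finite_induct) (auto simp: Yu_add)

lemma trunc: "\<exists>N. \<forall>m\<ge>N. Y u m x = 0" using voa by (simp add: is_VOA_def)
lemma vacY: "Y vac m x = (if m = -1 then x else 0)" using voa by (simp add: is_VOA_def)
lemma creat: "m \<ge> 0 \<Longrightarrow> Y u m vac = 0" using voa by (simp add: is_VOA_def)
lemma creat1: "Y u (-1) vac = u" using voa by (simp add: is_VOA_def)
lemma jacobi: "(\<forall>i\<ge>N. Y u (r + int i) v = 0 \<and> Y v (q + int i) w = 0 \<and> Y u (p + int i) w = 0) \<Longrightarrow>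
        (\<Sum>i<N. scale (of_int p gchoose i) (Y (Y u (r + int i) v) (p + q - int i) w))
      = (\<Sum>i<N. scale ((-1)^i * (of_int r gchoose i))
              (Y u (p + r - int i) (Y v (q + int i) w)
               - scale ((-1) powi r) (Y v (q + r - int i) (Y u (p + int i) w))))"
  using voa unfolding is_VOA_def by blast
lemma vir: "Lv Y om m (Lv Y om n x) - Lv Y om n (Lv Y om m x)
        = scale (of_int (m - n)) (Lv Y om (m + n) x)
          + scale (if m + n = 0 then (of_int (m^3 - m) / 12) * c else 0) x"
  using voa unfolding is_VOA_def by blast
lemma deriv: "Y (Lv Y om (-1) u) m x = scale (- of_int m) (Y u (m - 1) x)"
  using voa unfolding is_VOA_def by blast

lemma B_bil: "bilinear_form scale B" using form by (simp add: invariant_form_def)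
lemma B_addl: "B (x + y) z = B x z + B y z" using B_bil by (simp add: bilinear_form_def)
lemma B_addr: "B z (x + y) = B z x + B z y" using B_bil by (simp add: bilinear_form_def)
lemma B_scalel: "B (scale a x) y = a * B x y" using B_bil by (simp add: bilinear_form_def)
lemma B_scaler: "B x (scale a y) = a * B x y" using B_bil by (simp add: bilinear_form_def)
lemma B_0l[simp]: "B 0 y = 0" using B_scalel[of 0 0 y] by simp
lemma B_0r[simp]: "B y 0 = 0" using B_scaler[of y 0 0] by simp
lemma B_suml: "B (sum f A) y = (\<Sum>a\<in>A. B (f a) y)"
  by (induction A rule: infinite_finite_induct) (auto simp: B_addl)
lemma B_sumr: "B y (sum f A) = (\<Sum>a\<in>A. B y (f a))"
  by (induction A rule: infinite_finite_induct) (auto simp: B_addr)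
lemma B_inv: "u \<in> Vgr scale Y om k \<Longrightarrow>
        B (Y u m a) b = (-1)^k * (\<Sum>j\<le>k. (1 / fact j) *
            B a (Y ((Lv Y om 1 ^^ j) u) (2 * int k - m - int j - 2) b))"
  using form by (simp add: invariant_form_def)

abbreviation L where "L n \<equiv> Lv Y om n"

lemma L_lin: "L n (x + y) = L n x + L n y" "L n (scale a x) = scale a (L n x)" "L n 0 = 0"
  "L n (sum f A) = (\<Sum>a\<in>A. L n (f a))"
  by (simp_all add: Lv_def Y_add Y_scale Y_sum)

lemma L_vac: "n \<ge> -1 \<Longrightarrow> L n vac = 0" by (simp add: Lv_def creat)

lemma om_eq: "om = L (-2) vac" by (simp add: Lv_def creat1)

lemma L1_om: "L 1 om = 0"
proof -
  have "L 1 (L (-2) vac) - L (-2) (L 1 vac) = scale 3 (L (-1) vac)"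
    using vir[of 1 "-2" vac] by simp
  thus ?thesis by (simp add: L_vac L_lin om_eq[symmetric])
qed

lemma om_V2: "om \<in> Vgr scale Y om 2"
proof -
  have "L 0 (L (-2) vac) - L (-2) (L 0 vac) = scale 2 (L (-2) vac)"
    using vir[of 0 "-2" vac] by simp
  thus ?thesis by (simp add: Vgr_def L_vac L_lin om_eq[symmetric])
qed

lemma B_adj: "B (L n a) b = B a (L (-n) b)"
proof -
  have "B (Y om (n+1) a) b = (\<Sum>j\<le>2. (1 / fact j) *
            B a (Y ((L 1 ^^ j) om) (2 * 2 - (n+1) - int j - 2) b))"
    using B_inv[OF om_V2, of "n+1" a b] by simp
  also have "\<dots> = B a (Y om (1 - n) b)"
    by (simp add: numeral_2_eq_2 L1_om L_lin)
  finally show ?thesis by (simp add: Lv_def)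
qed

end

context voactx begin

lemma comm: "Y u (int P) (Y v q w) - Y v q (Y u (int P) w) =
   (\<Sum>i\<le>P. scale (of_nat (P choose i)) (Y (Y u (int i) v) (int P + q - int i) w))"
proof -
  obtain N1 where N1: "\<forall>m\<ge>N1. Y u m v = 0" using trunc by blast
  obtain N2 where N2: "\<forall>m\<ge>N2. Y v m w = 0" using trunc by blast
  obtain N3 where N3: "\<forall>m\<ge>N3. Y u m w = 0" using trunc by blast
  define N where "N = nat \<bar>N1\<bar> + nat \<bar>N2 - q\<bar> + nat \<bar>N3\<bar> + P + 1"
  have H: "\<forall>i\<ge>N. Y u (0 + int i) v = 0 \<and> Y v (q + int i) w = 0 \<and> Y u (int P + int i) w = 0"
    using N1 N2 N3 unfolding N_def by auto
  note J = jacobi[OF H]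
  have r: "(\<Sum>i<N. scale ((-1)^i * (of_int 0 gchoose i))
              (Y u (int P + 0 - int i) (Y v (q + int i) w)
               - scale ((-1) powi 0) (Y v (q + 0 - int i) (Y u (int P + int i) w))))
         = Y u (int P) (Y v q w) - Y v q (Y u (int P) w)"
  proof -
    have "N = Suc (N - 1)" unfolding N_def by simp
    then have "{..<N} = insert 0 {1..<N}" by auto
    moreover have "\<forall>i\<in>{1..<N}. (0::complex) gchoose i = 0"
    proof
      fix i :: nat assume "i \<in> {1..<N}"
      then obtain j where "i = Suc j" by (cases i) auto
      then show "(0::complex) gchoose i = 0" by (simp add: gbinomial_0)
    qed
    ultimately show ?thesis by (simp add: gbinomial_0)
  qed
  have l: "(\<Sum>i<N. scale (of_int (int P) gchoose i) (Y (Y u (0 + int i) v) (int P + q - int i) w))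
     = (\<Sum>i\<le>P. scale (of_nat (P choose i)) (Y (Y u (int i) v) (int P + q - int i) w))"
  proof -
    have "(\<Sum>i<N. scale (of_int (int P) gchoose i) (Y (Y u (0 + int i) v) (int P + q - int i) w))
        = (\<Sum>i<N. scale (of_nat (P choose i)) (Y (Y u (int i) v) (int P + q - int i) w))"
      by (simp add: binomial_gbinomial[symmetric])
    also have "\<dots> = (\<Sum>i\<le>P. scale (of_nat (P choose i)) (Y (Y u (int i) v) (int P + q - int i) w))"
      by (rule sum.mono_neutral_right) (auto simp: N_def)
    finally show ?thesis .
  qed
  show ?thesis using J l r by simp
qed

end

context voactx begin

abbreviation V where "V k \<equiv> Vgr scale Y om k"

lemma L0V: "x \<in> V k \<Longrightarrow> L 0 x = scale (of_nat k) x" by (simp add: Vgr_def)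

lemma cLm1: "L (-1) (Y v q w) = Y v q (L (-1) w) + scale (- of_int q) (Y v (q - 1) w)"
proof -
  have "Y om (int 0) (Y v q w) - Y v q (Y om (int 0) w) =
   (\<Sum>i\<le>0. scale (of_nat (0 choose i)) (Y (Y om (int i) v) (int 0 + q - int i) w))" by (rule comm)
  then have "L (-1) (Y v q w) - Y v q (L (-1) w) = Y (L (-1) v) q w" by (simp add: Lv_def)
  then show ?thesis by (simp add: deriv algebra_simps)
qed

lemma cL0: assumes "v \<in> V k"
  shows "L 0 (Y v q w) = Y v q (L 0 w) + scale (of_nat k - of_int q - 1) (Y v q w)"
proof -
  have "Y om (int 1) (Y v q w) - Y v q (Y om (int 1) w) =
   (\<Sum>i\<le>1. scale (of_nat (1 choose i)) (Y (Y om (int i) v) (int 1 + q - int i) w))" by (rule comm)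
  then have "L 0 (Y v q w) - Y v q (L 0 w) = Y (L (-1) v) (1 + q) w + Y (L 0 v) q w"
    by (simp add: Lv_def)
  also have "\<dots> = scale (- of_int (1+q)) (Y v q w) + scale (of_nat k) (Y v q w)"
    by (simp add: deriv L0V[OF assms] Yu_scale)
  also have "\<dots> = scale (of_nat k - of_int q - 1) (Y v q w)"
    by (simp add: vs.scale_left_distrib[symmetric] algebra_simps)
  finally show ?thesis by (simp add: algebra_simps)
qed

lemma cL1: assumes "v \<in> V k"
  shows "L 1 (Y v q w) = Y v q (L 1 w) + scale (2 * of_nat k - of_int q - 2) (Y v (q + 1) w) + Y (L 1 v) q w"
proof -
  have "Y om (int 2) (Y v q w) - Y v q (Y om (int 2) w) =
   (\<Sum>i\<le>2. scale (of_nat (2 choose i)) (Y (Y om (int i) v) (int 2 + q - int i) w))" by (rule comm)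
  also have "\<dots> = Y (Y om 0 v) (2 + q) w + scale 2 (Y (Y om 1 v) (1 + q) w) + Y (Y om 2 v) q w"
    by (simp add: numeral_2_eq_2)
  finally have "L 1 (Y v q w) - Y v q (L 1 w) = Y (L (-1) v) (2 + q) w + scale 2 (Y (L 0 v) (1 + q) w) + Y (L 1 v) q w"
    by (simp add: Lv_def)
  also have "\<dots> = scale (- of_int (2+q)) (Y v (q + 1) w) + scale (2 * of_nat k) (Y v (q+1) w) + Y (L 1 v) q w"
    by (simp add: deriv L0V[OF assms] Yu_scale vs.scale_scale add.commute)
  also have "\<dots> = scale (2 * of_nat k - of_int q - 2) (Y v (q + 1) w) + Y (L 1 v) q w"
    by (simp add: vs.scale_left_distrib[symmetric])
  finally show ?thesis by (simp add: algebra_simps)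
qed
end

context voactx begin

definition ff :: "'v \<times> int \<Rightarrow> 'v \<Rightarrow> 'v" where "ff = (\<lambda>(u, e) x. Y u (- e - 1) x)"

lemma ff_app: "ff (u, e) x = Y u (- e - 1) x" by (simp add: ff_def)

lemma Z0_ff: "Z0 Y B vac us es = B vac (foldr ff (zip us es) vac)"
  by (simp add: Z0_def ff_def)

lemma ff_add: "ff p (x + y) = ff p x + ff p y" by (cases p) (simp add: ff_def Y_add)
lemma ff_scale: "ff p (scale a x) = scale a (ff p x)" by (cases p) (simp add: ff_def Y_scale)
lemma ff_0[simp]: "ff p 0 = 0" by (cases p) (simp add: ff_def)
lemma ff_sum: "ff p (sum f A) = (\<Sum>a\<in>A. ff p (f a))"
  by (induction A rule: infinite_finite_induct) (auto simp: ff_add)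

lemma pf_add: "foldr ff ps (x + y) = foldr ff ps x + foldr ff ps y"
  by (induction ps) (auto simp: ff_add)
lemma pf_scale: "foldr ff ps (scale a x) = scale a (foldr ff ps x)"
  by (induction ps) (auto simp: ff_scale)
lemma pf_0[simp]: "foldr ff ps 0 = 0"
  by (induction ps) auto

lemma foldr_upd: "i < length ps \<Longrightarrow>
   foldr f (ps[i := p']) w = foldr f (take i ps) (f p' (foldr f (drop (Suc i) ps) w))"
  by (simp add: upd_conv_take_nth_drop)

lemma prod_comm:
  assumes "\<And>i x. i < length ps \<Longrightarrow> A (ff (ps!i) x) = ff (ps!i) (A x) + H i x"
  shows "A (foldr ff ps w) = foldr ff ps (A w) +
     (\<Sum>i<length ps. foldr ff (take i ps) (H i (foldr ff (drop (Suc i) ps) w)))"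
  using assms
proof (induction ps arbitrary: H)
  case Nil
  then show ?case by simp
next
  case (Cons p ps)
  have IH: "A (foldr ff ps w) = foldr ff ps (A w) +
     (\<Sum>i<length ps. foldr ff (take i ps) (H (Suc i) (foldr ff (drop (Suc i) ps) w)))"
    apply (rule Cons.IH)
    subgoal for i x using Cons.prems[of "Suc i" x] by simp
    done
  have "A (foldr ff (p # ps) w) = ff p (A (foldr ff ps w)) + H 0 (foldr ff ps w)"
    using Cons.prems[of 0] by simp
  also have "\<dots> = foldr ff (p # ps) (A w) +
     (\<Sum>i<length (p#ps). foldr ff (take i (p#ps)) (H i (foldr ff (drop (Suc i) (p#ps)) w)))"
    unfolding IH length_Cons sum.lessThan_Suc_shift by (simp add: ff_add ff_sum del: sum.lessThan_Suc)
  finally show ?case .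
qed

lemma zid:
  assumes "\<And>i x. i < length ps \<Longrightarrow> A (ff (ps!i) x) = ff (ps!i) (A x) + H i x"
    and "A vac = 0" and "\<And>x. B vac (A x) = 0"
  shows "(\<Sum>i<length ps. B vac (foldr ff (take i ps) (H i (foldr ff (drop (Suc i) ps) vac)))) = 0"
  using prod_comm[OF assms(1), of vac] assms(2) assms(3)[of "foldr ff ps vac"] by (simp add: B_sumr)

lemma BvacL: "n \<in> {-1,0,1} \<Longrightarrow> B vac (L n x) = 0"
  using B_adj[of n vac x] B_adj[of "-n" vac x] L_vac[of "-n"] by auto

lemma Z0_m1: assumes "length us = length es"
  shows "(\<Sum>i<length us. of_int (es!i + 1) * Z0 Y B vac us (es[i := es!i + 1])) = 0"
proof -
  let ?ps = "zip us es"
  define H where "H i x = scale (of_int (es!i + 1)) (ff (us!i, es!i + 1) x)" for i x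
  have 1: "L (-1) (ff (?ps!i) x) = ff (?ps!i) (L (-1) x) + H i x" if "i < length ?ps" for i x
    using that by (simp add: ff_app H_def cLm1 algebra_simps)
  have "(\<Sum>i<length ?ps. B vac (foldr ff (take i ?ps) (H i (foldr ff (drop (Suc i) ?ps) vac)))) = 0"
    by (rule zid[OF 1]) (auto simp: L_vac BvacL)
  moreover have "B vac (foldr ff (take i ?ps) (H i (foldr ff (drop (Suc i) ?ps) vac)))
      = of_int (es!i + 1) * Z0 Y B vac us (es[i := es!i + 1])" if "i < length us" for i
  proof -
    have "Z0 Y B vac us (es[i := es!i + 1]) = B vac (foldr ff (?ps[i := (us!i, es!i+1)]) vac)"
      by (simp add: Z0_ff zip_update[symmetric])
    then show ?thesis using that assms
      by (simp add: H_def pf_scale B_scaler foldr_upd)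
  qed
  ultimately show ?thesis using assms by simp
qed

lemma Z0_0: assumes "length us = length es" and "\<And>i. i < length us \<Longrightarrow> us!i \<in> V (ks!i)"
  shows "(\<Sum>i<length us. (of_nat (ks!i) + of_int (es!i)) * Z0 Y B vac us es) = 0"
proof -
  let ?ps = "zip us es"
  define H where "H i x = scale (of_nat (ks!i) + of_int (es!i)) (ff (us!i, es!i) x)" for i x
  have 1: "L 0 (ff (?ps!i) x) = ff (?ps!i) (L 0 x) + H i x" if "i < length ?ps" for i x
    using that assms(2)[of i] by (simp add: ff_app H_def cL0 algebra_simps)
  have "(\<Sum>i<length ?ps. B vac (foldr ff (take i ?ps) (H i (foldr ff (drop (Suc i) ?ps) vac)))) = 0"
    by (rule zid[OF 1]) (auto simp: L_vac BvacL)
  moreover have "B vac (foldr ff (take i ?ps) (H i (foldr ff (drop (Suc i) ?ps) vac)))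
      = (of_nat (ks!i) + of_int (es!i)) * Z0 Y B vac us es" if "i < length us" for i
  proof -
    have "?ps[i := (us!i, es!i)] = ?ps" using that assms(1)
      by (metis list_update_id nth_zip)
    then have "Z0 Y B vac us es = B vac (foldr ff (?ps[i := (us!i, es!i)]) vac)"
      by (simp add: Z0_ff)
    then show ?thesis using that assms
      by (simp add: H_def pf_scale B_scaler foldr_upd)
  qed
  ultimately show ?thesis using assms by simp
qed

lemma Z0_1: assumes "length us = length es" and "\<And>i. i < length us \<Longrightarrow> us!i \<in> V (ks!i)"
  shows "(\<Sum>i<length us. (2 * of_nat (ks!i) + of_int (es!i) - 1) * Z0 Y B vac us (es[i := es!i - 1])
            + Z0 Y B vac (us[i := L 1 (us!i)]) es) = 0"
proof -
  let ?ps = "zip us es"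
  define H where "H i x = scale (2 * of_nat (ks!i) + of_int (es!i) - 1) (ff (us!i, es!i - 1) x)
      + ff (L 1 (us!i), es!i) x" for i x
  have 1: "L 1 (ff (?ps!i) x) = ff (?ps!i) (L 1 x) + H i x" if "i < length ?ps" for i x
    using that assms(2)[of i] by (simp add: ff_app H_def cL1 algebra_simps)
  have "(\<Sum>i<length ?ps. B vac (foldr ff (take i ?ps) (H i (foldr ff (drop (Suc i) ?ps) vac)))) = 0"
    by (rule zid[OF 1]) (auto simp: L_vac BvacL)
  moreover have "B vac (foldr ff (take i ?ps) (H i (foldr ff (drop (Suc i) ?ps) vac)))
      = (2 * of_nat (ks!i) + of_int (es!i) - 1) * Z0 Y B vac us (es[i := es!i - 1])
            + Z0 Y B vac (us[i := L 1 (us!i)]) es" if "i < length us" for i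
  proof -
    have "Z0 Y B vac us (es[i := es!i - 1]) = B vac (foldr ff (?ps[i := (us!i, es!i - 1)]) vac)"
      by (simp add: Z0_ff zip_update[symmetric])
    moreover have "Z0 Y B vac (us[i := L 1 (us!i)]) es = B vac (foldr ff (?ps[i := (L 1 (us!i), es!i)]) vac)"
      by (simp add: Z0_ff zip_update[symmetric])
    ultimately show ?thesis using that assms
      by (simp add: H_def pf_scale pf_add B_scaler B_addr foldr_upd)
  qed
  ultimately show ?thesis using assms by simp
qed

end

context voactx begin

lemma Lm1V: "x \<in> V k \<Longrightarrow> L (-1) x \<in> V (Suc k)"
proof -
  assume x: "x \<in> V k"
  have "L 0 (L (-1) x) - L (-1) (L 0 x) = scale 1 (L (-1) x)"
    using vir[of 0 "-1" x] by simp
  then have "L 0 (L (-1) x) = scale (of_nat k) (L (-1) x) + L (-1) x"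
    by (simp add: L0V[OF x] L_lin algebra_simps)
  also have "\<dots> = scale (of_nat (Suc k)) (L (-1) x)"
    by (simp add: vs.scale_left_distrib algebra_simps)
  finally show ?thesis by (simp add: Vgr_def)
qed

lemma L1V: "x \<in> V (Suc k) \<Longrightarrow> L 1 x \<in> V k"
proof -
  assume x: "x \<in> V (Suc k)"
  have "L 0 (L 1 x) - L 1 (L 0 x) = scale (-1) (L 1 x)"
    using vir[of 0 "1" x] by simp
  then have "L 0 (L 1 x) = scale (of_nat (Suc k)) (L 1 x) + scale (-1) (L 1 x)"
    by (simp add: L0V[OF x] L_lin algebra_simps)
  also have "\<dots> = scale (of_nat k) (L 1 x)"
    by (simp add: vs.scale_left_distrib[symmetric] algebra_simps)
  finally show ?thesis by (simp add: Vgr_def)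
qed

lemma L1V0: "x \<in> V 0 \<Longrightarrow> L 1 x = 0"
proof -
  assume "x \<in> V 0"
  then obtain a where "x = scale a vac" using cft by (auto simp: strong_CFT_type_def)
  then show ?thesis by (simp add: L_lin L_vac)
qed

lemma sum_set_nth: "distinct xs \<Longrightarrow> sum f (set xs) = (\<Sum>t<length xs. f (xs!t))"
  by (simp add: sum.distinct_set_conv_list sum_list_sum_nth atLeast0LessThan)

lemma expand_gen:
  assumes d: "distinct xs" and x: "x \<in> vs.span (set xs)" and l: "length ys = length xs"
    and bo: "\<And>i j. i < length xs \<Longrightarrow> j < length xs \<Longrightarrow> Bf (xs!i) (ys!j) = (if i = j then 1 else 0)"
    and sc: "\<And>a x y. Bf (scale a x) y = a * Bf x y"
    and sm: "\<And>(f::nat\<Rightarrow>'v) A y. Bf (sum f A) y = (\<Sum>a\<in>A. Bf (f a) y)"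
  shows "x = (\<Sum>t<length xs. scale (Bf x (ys!t)) (xs!t))"
proof -
  obtain u where u: "x = (\<Sum>v\<in>set xs. scale (u v) v)"
    using x vs.span_finite[of "set xs"] by auto
  then have u2: "x = (\<Sum>t<length xs. scale (u (xs!t)) (xs!t))" by (simp add: sum_set_nth[OF d])
  have "Bf x (ys!s) = u (xs!s)" if "s < length xs" for s
  proof -
    have "Bf x (ys!s) = Bf (\<Sum>t<length xs. scale (u (xs!t)) (xs!t)) (ys!s)"
      by (rule arg_cong[where f="\<lambda>z. Bf z (ys!s)", OF u2])
    also have "\<dots> = (\<Sum>t<length xs. Bf (scale (u (xs!t)) (xs!t)) (ys!s))"
      by (rule sm)
    also have "\<dots> = (\<Sum>t<length xs. u (xs!t) * (if t = s then 1 else 0))"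
      by (rule sum.cong) (auto simp: sc bo that)
    also have "\<dots> = u (xs!s)" using that by (simp add: if_distrib cong: if_cong)
    finally show ?thesis .
  qed
  then have "(\<Sum>t<length xs. scale (Bf x (ys!t)) (xs!t)) = (\<Sum>t<length xs. scale (u (xs!t)) (xs!t))"
    by simp
  then show ?thesis using u2 by simp
qed

lemma bas_props: "distinct (bas n)" "set (bas n) \<subseteq> V n" "\<not> vs.dependent (set (bas n))"
   "V n \<subseteq> vs.span (set (bas n))" "length (dual n) = length (bas n)" "set (dual n) \<subseteq> V n"
  using bases unfolding hom_dual_bases_def by auto

lemma bo: "i < length (bas n) \<Longrightarrow> j < length (bas n) \<Longrightarrow> B (bas n ! i) (dual n ! j) = (if i = j then 1 else 0)"
  using bases unfolding hom_dual_bases_def by auto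

lemma dual_distinct: "distinct (dual n)"
proof -
  have "dual n ! i \<noteq> dual n ! j" if "i < length (dual n)" "j < length (dual n)" "i \<noteq> j" for i j
  proof
    assume e: "dual n ! i = dual n ! j"
    have "B (bas n ! i) (dual n ! i) = 1" "B (bas n ! i) (dual n ! j) = 0"
      using that bas_props(5)[of n] bo by auto
    then show False using e by simp
  qed
  then show ?thesis by (auto simp: distinct_conv_nth)
qed

lemma dual_indep: "\<not> vs.dependent (set (dual n))"
proof (rule vs.independent_if_scalars_zero)
  show "finite (set (dual n))" by simp
  fix f x assume s: "(\<Sum>x\<in>set (dual n). scale (f x) x) = 0" and x: "x \<in> set (dual n)"
  obtain s0 where s0: "s0 < length (dual n)" "x = dual n ! s0" using x by (auto simp: in_set_conv_nth)
  have "0 = B (bas n ! s0) (\<Sum>t<length (dual n). scale (f (dual n ! t)) (dual n ! t))"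
    using s by (simp add: sum_set_nth[OF dual_distinct])
  also have "\<dots> = (\<Sum>t<length (dual n). f (dual n ! t) * (if s0 = t then 1 else 0))"
    using s0 by (auto simp: B_sumr B_scaler bas_props(5) bo intro!: sum.cong)
  also have "\<dots> = f x" using s0 by (simp add: if_distrib cong: if_cong)
  finally show "f x = 0" by simp
qed

lemma dual_span: "V n \<subseteq> vs.span (set (dual n))"
proof
  fix x assume x: "x \<in> V n"
  show "x \<in> vs.span (set (dual n))"
  proof (rule ccontr)
    assume nx: "x \<notin> vs.span (set (dual n))"
    have ind: "\<not> vs.dependent (insert x (set (dual n)))"
      using vs.independent_insertI[OF nx dual_indep] .
    have sub: "insert x (set (dual n)) \<subseteq> vs.span (set (bas n))"
      using x bas_props(4,6)[of n] by auto
    have "card (insert x (set (dual n))) \<le> card (set (bas n))"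
      using vs.independent_span_bound[OF _ ind sub] by simp
    moreover have "x \<notin> set (dual n)" using nx vs.span_base by blast
    ultimately show False
      using distinct_card[OF dual_distinct] distinct_card[OF bas_props(1)] bas_props(5)[of n] by simp
  qed
qed

lemma exp_bas: "x \<in> V n \<Longrightarrow> x = (\<Sum>t<length (bas n). scale (B x (dual n ! t)) (bas n ! t))"
  by (rule expand_gen[where Bf = B]) (use bas_props[of n] in \<open>auto simp: B_scalel B_suml bo\<close>)

lemma exp_dual: "x \<in> V n \<Longrightarrow> x = (\<Sum>t<length (bas n). scale (B (bas n ! t) x) (dual n ! t))"
proof -
  assume x: "x \<in> V n"
  have "x = (\<Sum>t<length (dual n). scale ((\<lambda>a b. B b a) x (bas n ! t)) (dual n ! t))"
    by (rule expand_gen[where Bf = "\<lambda>a b. B b a"])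
      (use bas_props[of n] dual_distinct[of n] dual_span[of n] x in \<open>auto simp: B_scaler B_sumr bo\<close>)
  then show ?thesis using bas_props(5)[of n] by simp
qed

end

context voactx begin

lemma bas_V: "t < length (bas n) \<Longrightarrow> bas n ! t \<in> V n"
  using bas_props(2)[of n] nth_mem by blast
lemma dual_V: "t < length (bas n) \<Longrightarrow> dual n ! t \<in> V n"
  using bas_props(6)[of n] bas_props(5)[of n] nth_mem by (metis subsetD)

lemma swap1:
  assumes Qsl: "\<And>(f::nat\<Rightarrow>'v) A b. Q (sum f A) b = (\<Sum>a\<in>A. Q (f a) b)"
    and Qsr: "\<And>(f::nat\<Rightarrow>'v) A b. Q b (sum f A) = (\<Sum>a\<in>A. Q b (f a))"
    and Qcl: "\<And>a x b. Q (scale a x) b = a * Q x b"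
    and Qcr: "\<And>a x b. Q b (scale a x) = a * Q b x"
  shows "(\<Sum>t<length (bas (Suc k)). Q (dual (Suc k) ! t) (L 1 (bas (Suc k) ! t)))
       = (\<Sum>s<length (bas k). Q (L (-1) (dual k ! s)) (bas k ! s))"
proof -
  let ?n = "length (bas (Suc k))" and ?m = "length (bas k)"
  have "(\<Sum>t<?n. Q (dual (Suc k) ! t) (L 1 (bas (Suc k) ! t)))
     = (\<Sum>t<?n. Q (dual (Suc k) ! t) (\<Sum>s<?m. scale (B (L 1 (bas (Suc k) ! t)) (dual k ! s)) (bas k ! s)))"
    by (rule sum.cong[OF refl], subst exp_bas[OF L1V[OF bas_V]], auto)
  also have "\<dots> = (\<Sum>t<?n. \<Sum>s<?m. B (bas (Suc k) ! t) (L (-1) (dual k ! s)) * Q (dual (Suc k) ! t) (bas k ! s))"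
    by (simp add: Qsr Qcr B_adj)
  also have "\<dots> = (\<Sum>s<?m. \<Sum>t<?n. B (bas (Suc k) ! t) (L (-1) (dual k ! s)) * Q (dual (Suc k) ! t) (bas k ! s))"
    by (rule sum.swap)
  also have "\<dots> = (\<Sum>s<?m. Q (\<Sum>t<?n. scale (B (bas (Suc k) ! t) (L (-1) (dual k ! s))) (dual (Suc k) ! t)) (bas k ! s))"
    by (simp add: Qsl Qcl)
  also have "\<dots> = (\<Sum>s<?m. Q (L (-1) (dual k ! s)) (bas k ! s))"
    by (rule sum.cong[OF refl], subst (2) exp_dual[OF Lm1V[OF dual_V]], auto)
  finally show ?thesis .
qed

lemma swap2:
  assumes Qsl: "\<And>(f::nat\<Rightarrow>'v) A b. Q (sum f A) b = (\<Sum>a\<in>A. Q (f a) b)"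
    and Qsr: "\<And>(f::nat\<Rightarrow>'v) A b. Q b (sum f A) = (\<Sum>a\<in>A. Q b (f a))"
    and Qcl: "\<And>a x b. Q (scale a x) b = a * Q x b"
    and Qcr: "\<And>a x b. Q b (scale a x) = a * Q b x"
  shows "(\<Sum>t<length (bas (Suc k)). Q (L 1 (dual (Suc k) ! t)) (bas (Suc k) ! t))
       = (\<Sum>s<length (bas k). Q (dual k ! s) (L (-1) (bas k ! s)))"
proof -
  let ?n = "length (bas (Suc k))" and ?m = "length (bas k)"
  have "(\<Sum>t<?n. Q (L 1 (dual (Suc k) ! t)) (bas (Suc k) ! t))
     = (\<Sum>t<?n. Q (\<Sum>s<?m. scale (B (bas k ! s) (L 1 (dual (Suc k) ! t))) (dual k ! s)) (bas (Suc k) ! t))"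
    by (rule sum.cong[OF refl], subst exp_dual[OF L1V[OF dual_V]], auto)
  also have "\<dots> = (\<Sum>t<?n. \<Sum>s<?m. B (L (-1) (bas k ! s)) (dual (Suc k) ! t) * Q (dual k ! s) (bas (Suc k) ! t))"
    by (simp add: Qsl Qcl B_adj)
  also have "\<dots> = (\<Sum>s<?m. \<Sum>t<?n. B (L (-1) (bas k ! s)) (dual (Suc k) ! t) * Q (dual k ! s) (bas (Suc k) ! t))"
    by (rule sum.swap)
  also have "\<dots> = (\<Sum>s<?m. Q (dual k ! s) (\<Sum>t<?n. scale (B (L (-1) (bas k ! s)) (dual (Suc k) ! t)) (bas (Suc k) ! t)))"
    by (simp add: Qsr Qcr)
  also have "\<dots> = (\<Sum>s<?m. Q (dual k ! s) (L (-1) (bas k ! s)))"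
    by (rule sum.cong[OF refl], subst (2) exp_bas[OF Lm1V[OF bas_V]], auto)
  finally show ?thesis .
qed

end

lemma in_listset: "xs \<in> listset As \<longleftrightarrow> length xs = length As \<and> (\<forall>i<length As. xs!i \<in> As!i)"
proof (induction As arbitrary: xs)
  case Nil then show ?case by simp
next
  case (Cons A As)
  show ?case
  proof (cases xs)
    case Nil then show ?thesis by (simp add: set_Cons_def)
  next
    case (Cons x xs')
    then show ?thesis using Cons.IH[of xs']
      by (auto simp: set_Cons_def nth_Cons split: nat.splits)
  qed
qed

lemma sum_split_add: "(\<Sum>i<(n::nat) + m. f i) = (\<Sum>i<n. f i) + (\<Sum>j<m. f (n + j))"
  by (induction m) (auto simp: add.assoc)

lemma sum_pairs: "(\<Sum>j<2 * (g::nat). f j) = (\<Sum>i<g. f (2 * i) + f (2 * i + 1))"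
  by (induction g) (auto simp: add.assoc)

context voactx begin

definition W :: "nat \<Rightarrow> nat list \<Rightarrow> nat list \<Rightarrow> 'v list" where
  "W g ks js = concat (map (\<lambda>i. [dual (ks ! i) ! (js ! i), bas (ks ! i) ! (js ! i)]) [0..<g])"

definition JS :: "nat \<Rightarrow> nat list \<Rightarrow> nat list set" where
  "JS g ks = listset (map (\<lambda>i. {..<length (bas (ks ! i))}) [0..<g])"

lemma Zg_W: "Zg Y B vac bas dual g vs ey ew ks = (\<Sum>js\<in>JS g ks. Z0 Y B vac (vs @ W g ks js) (ey @ ew))"
  by (simp add: Zg_def W_def JS_def)

lemma JS_mem: "js \<in> JS g ks \<longleftrightarrow> length js = g \<and> (\<forall>i<g. js!i < length (bas (ks!i)))"
  by (simp add: JS_def in_listset)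

lemma W_len[simp]: "length (W g ks js) = 2 * g"
  by (induction g) (auto simp: W_def)

lemma W_nth: "j < 2 * g \<Longrightarrow> W g ks js ! j =
   (if even j then dual (ks!(j div 2)) ! (js!(j div 2)) else bas (ks!(j div 2)) ! (js!(j div 2)))"
proof (induction g arbitrary: j)
  case 0 then show ?case by simp
next
  case (Suc g)
  have e: "W (Suc g) ks js = W g ks js @ [dual (ks ! g) ! (js ! g), bas (ks ! g) ! (js ! g)]"
    by (simp add: W_def)
  show ?case
  proof (cases "j < 2 * g")
    case True then show ?thesis using Suc.IH[of j] by (simp add: e nth_append)
  next
    case False
    then have "j = 2*g \<or> j = 2*g+1" using Suc.prems by auto
    then show ?thesis by (auto simp: e nth_append)
  qed
qed

lemma W_V: "js \<in> JS g ks \<Longrightarrow> j < 2 * g \<Longrightarrow> W g ks js ! j \<in> V (ks ! (j div 2))"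
  by (auto simp: W_nth JS_mem bas_V dual_V)

definition R :: "nat \<Rightarrow> nat list \<Rightarrow> nat \<Rightarrow> nat list set" where
  "R g ks i = {js. length js = g \<and> js!i = 0 \<and> (\<forall>l<g. l \<noteq> i \<longrightarrow> js!l < length (bas (ks!l)))}"

lemma R_upd: "i < g \<Longrightarrow> R g (ks[i := k']) i = R g ks i"
  unfolding R_def by (rule Collect_cong) (auto simp: nth_list_update)

lemma JS_split: assumes "i < g" "length ks = g"
  shows "(\<Sum>js\<in>JS g ks. f js) = (\<Sum>r\<in>R g ks i. \<Sum>t<length (bas (ks!i)). f (r[i := t]))"
proof -
  have bij: "bij_betw (\<lambda>(r, t). r[i := t]) (R g ks i \<times> {..<length (bas (ks!i))}) (JS g ks)"
  proof (rule bij_betw_byWitness[where f' = "\<lambda>js. (js[i := 0], js!i)"])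
    show "(\<lambda>(r, t). r[i := t]) ` (R g ks i \<times> {..<length (bas (ks ! i))}) \<subseteq> JS g ks"
      using assms by (auto simp: R_def JS_mem nth_list_update)
    show "(\<lambda>js. (js[i := 0], js ! i)) ` JS g ks \<subseteq> R g ks i \<times> {..<length (bas (ks ! i))}"
      using assms by (auto simp: R_def JS_mem nth_list_update)
    show "\<forall>x\<in>R g ks i \<times> {..<length (bas (ks ! i))}. (\<lambda>js. (js[i := 0], js ! i)) ((\<lambda>(r, t). r[i := t]) x) = x"
      using assms by (auto simp: R_def) (metis list_update_id)
    show "\<forall>y\<in>JS g ks. (\<lambda>(r, t). r[i := t]) ((\<lambda>js. (js[i := 0], js ! i)) y) = y"
      using assms by (auto simp: JS_mem)
  qed
  have "(\<Sum>r\<in>R g ks i. \<Sum>t<length (bas (ks!i)). f (r[i := t]))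
      = (\<Sum>(r,t)\<in>R g ks i \<times> {..<length (bas (ks!i))}. f (r[i := t]))"
    by (rule sum.cartesian_product)
  also have "\<dots> = (\<Sum>js\<in>JS g ks. f js)"
    using sum.reindex_bij_betw[OF bij, of f] by (simp add: case_prod_unfold)
  finally show ?thesis by simp
qed

lemma W_upd: assumes "i < g" "length r = g" "length ks = g"
  shows "W g (ks[i := k']) (r[i := t]) = (W g ks r)[2*i := dual k' ! t, 2*i+1 := bas k' ! t]"
proof (rule nth_equalityI)
  show "length (W g (ks[i := k']) (r[i := t])) = length ((W g ks r)[2*i := dual k' ! t, 2*i+1 := bas k' ! t])"
    by simp
  fix j assume "j < length (W g (ks[i := k']) (r[i := t]))"
  then have j: "j < 2 * g" by simp
  show "W g (ks[i := k']) (r[i := t]) ! j = (W g ks r)[2*i := dual k' ! t, 2*i+1 := bas k' ! t] ! j"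
  proof (cases "j div 2 = i")
    case True
    then have "j = 2*i \<or> j = 2*i+1" by auto
    then show ?thesis using assms j by (auto simp: W_nth nth_list_update)
  next
    case False
    then have "j \<noteq> 2*i" "j \<noteq> 2*i+1" by auto
    then show ?thesis using assms j False by (simp add: W_nth nth_list_update)
  qed
qed

end

context voactx begin

lemma pf_sum: "foldr ff ps (sum f A) = (\<Sum>a\<in>A. foldr ff ps (f a))"
  by (induction A rule: infinite_finite_induct) (auto simp: pf_add)

lemma zip_upd1: "p < length us \<Longrightarrow> length us = length es \<Longrightarrow>
    zip (us[p := x]) es = (zip us es)[p := (x, es!p)]"
  by (metis list_update_id zip_update)

lemma Z0_slot_sum: assumes "p < length us" "length us = length es"
  shows "Z0 Y B vac (us[p := sum (f::nat \<Rightarrow> 'v) A]) es = (\<Sum>a\<in>A. Z0 Y B vac (us[p := f a]) es)"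
  using assms
  by (simp add: Z0_ff zip_upd1 foldr_upd ff_app Yu_sum pf_sum B_sumr)

lemma Z0_slot_scale: assumes "p < length us" "length us = length es"
  shows "Z0 Y B vac (us[p := scale a x]) es = a * Z0 Y B vac (us[p := x]) es"
  using assms
  by (simp add: Z0_ff zip_upd1 foldr_upd ff_app Yu_scale pf_scale B_scaler)

lemma Z0_deriv: assumes "p < length us" "length us = length es"
  shows "Z0 Y B vac (us[p := L (-1) (us!p)]) es = of_int (es!p + 1) * Z0 Y B vac us (es[p := es!p + 1])"
proof -
  have "zip us (es[p := es!p + 1]) = (zip us es)[p := (us!p, es!p + 1)]"
    by (simp add: zip_update[symmetric])
  then show ?thesis using assms
    by (simp add: Z0_ff zip_upd1 foldr_upd ff_app deriv pf_scale B_scaler pf_add B_addr algebra_simps)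
qed

end

context voactx begin

lemma Q_bil: assumes "p < length us" "q < length us" "p \<noteq> q" "length us = length es"
  shows "\<And>(f::nat\<Rightarrow>'v) A b. Z0 Y B vac (us[p := sum f A, q := b]) es = (\<Sum>a\<in>A. Z0 Y B vac (us[p := f a, q := b]) es)"
    and "\<And>(f::nat\<Rightarrow>'v) A b. Z0 Y B vac (us[p := b, q := sum f A]) es = (\<Sum>a\<in>A. Z0 Y B vac (us[p := b, q := f a]) es)"
    and "\<And>a x b. Z0 Y B vac (us[p := scale a x, q := b]) es = a * Z0 Y B vac (us[p := x, q := b]) es"
    and "\<And>a x b. Z0 Y B vac (us[p := b, q := scale a x]) es = a * Z0 Y B vac (us[p := b, q := x]) es"
proof -
  fix f :: "nat \<Rightarrow> 'v" and A b
  show "Z0 Y B vac (us[p := sum f A, q := b]) es = (\<Sum>a\<in>A. Z0 Y B vac (us[p := f a, q := b]) es)"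
    using Z0_slot_sum[of p "us[q := b]" es f A] assms by (simp add: list_update_swap)
  show "Z0 Y B vac (us[p := b, q := sum f A]) es = (\<Sum>a\<in>A. Z0 Y B vac (us[p := b, q := f a]) es)"
    using Z0_slot_sum[of q "us[p := b]" es f A] assms by simp
next
  fix a x b
  show "Z0 Y B vac (us[p := scale a x, q := b]) es = a * Z0 Y B vac (us[p := x, q := b]) es"
    using Z0_slot_scale[of p "us[q := b]" es a x] assms by (simp add: list_update_swap)
  show "Z0 Y B vac (us[p := b, q := scale a x]) es = a * Z0 Y B vac (us[p := b, q := x]) es"
    using Z0_slot_scale[of q "us[p := b]" es a x] assms by simp
qed

lemma upd3: "a \<noteq> b \<Longrightarrow> xs[a:=x, b:=y, a:=z] = xs[a:=z, b:=y]"
  by (metis list_update_overwrite list_update_swap)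

lemma upd3': "a \<noteq> b \<Longrightarrow> xs[a:=x, b:=y, b:=z] = xs[a:=x, b:=z]"
  by simp

lemma upd2_app: "length vs = n \<Longrightarrow> vs @ xs[p := a, q := b] = (vs @ xs)[n + p := a, n + q := b]"
  by (simp add: list_update_append)

lemma Wr_eq: assumes "i < g" "length ks = g" "r \<in> R g ks i"
  shows "W g (ks[i := k']) (r[i := t]) = (W g ks r)[2*i := dual k' ! t, 2*i+1 := bas k' ! t]"
  using W_upd[of i g r ks k' t] assms by (simp add: R_def)

lemma T_even: assumes lv: "length vs = n" and ly: "length ey = n" and lw: "length ew = 2 * g"
    and lk: "length ks = g" and ig: "i < g"
  shows "(\<Sum>js\<in>JS g ks. Z0 Y B vac (vs @ (W g ks js)[2*i := L 1 (W g ks js ! (2*i))]) (ey @ ew))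
     = rhomul i (dw (2*i+1) (Zg Y B vac bas dual g vs)) ey ew ks"
proof -
  let ?k = "ks ! i" and ?es = "ey @ ew"
  define Q where "Q r a b = Z0 Y B vac ((vs @ W g ks r)[n + 2*i := a, n + (2*i+1) := b]) ?es" for r a b
  have Qe: "Z0 Y B vac (vs @ (W g ks r)[2*i := a, 2*i+1 := b]) ?es = Q r a b" for r a b
    using lv by (simp add: Q_def upd2_app)
  have lens: "n + 2*i < length (vs @ W g ks r)" "n + (2*i+1) < length (vs @ W g ks r)"
     "length (vs @ W g ks r) = length ?es" for r
    using lv ly lw ig by auto
  note QB = Q_bil[OF lens(1) lens(2) _ lens(3), folded Q_def, simplified]
  have LHS: "(\<Sum>js\<in>JS g ks. Z0 Y B vac (vs @ (W g ks js)[2*i := L 1 (W g ks js ! (2*i))]) ?es)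
      = (\<Sum>r\<in>R g ks i. \<Sum>t<length (bas ?k). Q r (L 1 (dual ?k ! t)) (bas ?k ! t))"
  proof -
    have "(\<Sum>js\<in>JS g ks. Z0 Y B vac (vs @ (W g ks js)[2*i := L 1 (W g ks js ! (2*i))]) ?es)
      = (\<Sum>r\<in>R g ks i. \<Sum>t<length (bas ?k). Z0 Y B vac (vs @ (W g ks (r[i:=t]))[2*i := L 1 (W g ks (r[i:=t]) ! (2*i))]) ?es)"
      by (rule JS_split[OF ig lk])
    also have "\<dots> = (\<Sum>r\<in>R g ks i. \<Sum>t<length (bas ?k). Q r (L 1 (dual ?k ! t)) (bas ?k ! t))"
    proof (intro sum.cong refl)
      fix r t assume r: "r \<in> R g ks i"
      have "W g ks (r[i:=t]) = (W g ks r)[2*i := dual ?k ! t, 2*i+1 := bas ?k ! t]"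
        using Wr_eq[OF ig lk r, of "?k" t] by simp
      moreover have "2*i < length (W g ks r)" "2*i+1 < length (W g ks r)" using ig by auto
      ultimately show "Z0 Y B vac (vs @ (W g ks (r[i:=t]))[2*i := L 1 (W g ks (r[i:=t]) ! (2*i))]) ?es
          = Q r (L 1 (dual ?k ! t)) (bas ?k ! t)"
        by (simp add: upd3 nth_list_update Qe[symmetric])
    qed
    finally show ?thesis .
  qed
  show ?thesis
  proof (cases ?k)
    case 0
    have "Q r (L 1 (dual ?k ! t)) (bas ?k ! t) = 0" if "t < length (bas ?k)" for r t
    proof -
      have "dual ?k ! t \<in> V 0" using dual_V[OF that] 0 by simp
      then have "L 1 (dual ?k ! t) = scale 0 (dual ?k ! t)" using L1V0 by simp
      then show ?thesis using QB(3)[of r 0 "dual ?k ! t" "bas ?k ! t"] by simp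
    qed
    then show ?thesis using LHS 0 by (simp add: rhomul_def)
  next
    case (Suc k0)
    let ?ks' = "ks[i := k0]"
    have "(\<Sum>r\<in>R g ks i. \<Sum>t<length (bas ?k). Q r (L 1 (dual ?k ! t)) (bas ?k ! t))
       = (\<Sum>r\<in>R g ks i. \<Sum>s<length (bas k0). Q r (dual k0 ! s) (L (-1) (bas k0 ! s)))"
      unfolding Suc by (intro sum.cong refl swap2) (use QB in auto)
    also have "\<dots> = rhomul i (dw (2*i+1) (Zg Y B vac bas dual g vs)) ey ew ks"
    proof -
      have "rhomul i (dw (2*i+1) (Zg Y B vac bas dual g vs)) ey ew ks
        = of_int (ew ! (2*i+1) + 1) * (\<Sum>js\<in>JS g ?ks'. Z0 Y B vac (vs @ W g ?ks' js) (ey @ ew[2*i+1 := ew ! (2*i+1) + 1]))"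
        using Suc by (simp add: rhomul_def dw_def Zg_W)
      also have "\<dots> = of_int (ew ! (2*i+1) + 1) * (\<Sum>r\<in>R g ?ks' i. \<Sum>s<length (bas k0).
           Z0 Y B vac (vs @ W g ?ks' (r[i:=s])) (ey @ ew[2*i+1 := ew ! (2*i+1) + 1]))"
        using JS_split[of i g ?ks' "\<lambda>js. Z0 Y B vac (vs @ W g ?ks' js) (ey @ ew[2*i+1 := ew ! (2*i+1) + 1])"] ig lk by simp
      also have "\<dots> = (\<Sum>r\<in>R g ks i. \<Sum>s<length (bas k0). Q r (dual k0 ! s) (L (-1) (bas k0 ! s)))"
        unfolding R_upd[OF ig] sum_distrib_left
      proof (intro sum.cong refl)
        fix r s assume r: "r \<in> R g ks i"
        let ?us = "(vs @ W g ks r)[n + 2*i := dual k0 ! s, n + (2*i+1) := bas k0 ! s]"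
        have W': "vs @ W g ?ks' (r[i:=s]) = ?us"
          using Wr_eq[OF ig lk r, of k0 s] lv by (simp add: upd2_app)
        have p: "n + (2*i+1) < length ?us" "length ?us = length ?es" using lens by auto
        have nth: "?us ! (n + (2*i+1)) = bas k0 ! s" "?es ! (n + (2*i+1)) = ew ! (2*i+1)"
          using lens ly by (auto simp: nth_append)
        have ees: "?es[n + (2*i+1) := ?es ! (n + (2*i+1)) + 1] = ey @ ew[2*i+1 := ew ! (2*i+1) + 1]"
          using ly nth by (simp add: list_update_append)
        have "of_int (ew ! (2*i+1) + 1) * Z0 Y B vac (vs @ W g ?ks' (r[i:=s])) (ey @ ew[2*i+1 := ew ! (2*i+1) + 1])
            = Z0 Y B vac (?us[n + (2*i+1) := L (-1) (?us ! (n + (2*i+1)))]) ?es"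
          using Z0_deriv[OF p] W' nth ees by simp
        also have "\<dots> = Q r (dual k0 ! s) (L (-1) (bas k0 ! s))"
          by (simp only: nth(1) Q_def list_update_overwrite)
        finally show "of_int (ew ! (2*i+1) + 1) * Z0 Y B vac (vs @ W g ?ks' (r[i:=s])) (ey @ ew[2*i+1 := ew ! (2*i+1) + 1])
            = Q r (dual k0 ! s) (L (-1) (bas k0 ! s))" .
      qed
      finally show ?thesis by simp
    qed
    finally show ?thesis using LHS by simp
  qed
qed

lemma T_odd: assumes lv: "length vs = n" and ly: "length ey = n" and lw: "length ew = 2 * g"
    and lk: "length ks = g" and ig: "i < g"
  shows "(\<Sum>js\<in>JS g ks. Z0 Y B vac (vs @ (W g ks js)[2*i+1 := L 1 (W g ks js ! (2*i+1))]) (ey @ ew))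
     = rhomul i (dw (2*i) (Zg Y B vac bas dual g vs)) ey ew ks"
proof -
  let ?k = "ks ! i" and ?es = "ey @ ew"
  define Q where "Q r a b = Z0 Y B vac ((vs @ W g ks r)[n + 2*i := a, n + (2*i+1) := b]) ?es" for r a b
  have Qe: "Z0 Y B vac (vs @ (W g ks r)[2*i := a, 2*i+1 := b]) ?es = Q r a b" for r a b
    using lv by (simp add: Q_def upd2_app)
  have lens: "n + 2*i < length (vs @ W g ks r)" "n + (2*i+1) < length (vs @ W g ks r)"
     "length (vs @ W g ks r) = length ?es" for r
    using lv ly lw ig by auto
  note QB = Q_bil[OF lens(1) lens(2) _ lens(3), folded Q_def, simplified]
  have LHS: "(\<Sum>js\<in>JS g ks. Z0 Y B vac (vs @ (W g ks js)[2*i+1 := L 1 (W g ks js ! (2*i+1))]) ?es)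
      = (\<Sum>r\<in>R g ks i. \<Sum>t<length (bas ?k). Q r (dual ?k ! t) (L 1 (bas ?k ! t)))"
  proof -
    have "(\<Sum>js\<in>JS g ks. Z0 Y B vac (vs @ (W g ks js)[2*i+1 := L 1 (W g ks js ! (2*i+1))]) ?es)
      = (\<Sum>r\<in>R g ks i. \<Sum>t<length (bas ?k). Z0 Y B vac (vs @ (W g ks (r[i:=t]))[2*i+1 := L 1 (W g ks (r[i:=t]) ! (2*i+1))]) ?es)"
      by (rule JS_split[OF ig lk])
    also have "\<dots> = (\<Sum>r\<in>R g ks i. \<Sum>t<length (bas ?k). Q r (dual ?k ! t) (L 1 (bas ?k ! t)))"
    proof (intro sum.cong refl)
      fix r t assume r: "r \<in> R g ks i"
      have "W g ks (r[i:=t]) = (W g ks r)[2*i := dual ?k ! t, 2*i+1 := bas ?k ! t]"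
        using Wr_eq[OF ig lk r, of "?k" t] by simp
      moreover have "2*i < length (W g ks r)" "2*i+1 < length (W g ks r)" using ig by auto
      ultimately show "Z0 Y B vac (vs @ (W g ks (r[i:=t]))[2*i+1 := L 1 (W g ks (r[i:=t]) ! (2*i+1))]) ?es
          = Q r (dual ?k ! t) (L 1 (bas ?k ! t))"
        by (simp add: nth_list_update Qe[symmetric])
    qed
    finally show ?thesis .
  qed
  show ?thesis
  proof (cases ?k)
    case 0
    have "Q r (dual ?k ! t) (L 1 (bas ?k ! t)) = 0" if "t < length (bas ?k)" for r t
    proof -
      have "bas ?k ! t \<in> V 0" using bas_V[OF that] 0 by simp
      then have "L 1 (bas ?k ! t) = scale 0 (bas ?k ! t)" using L1V0 by simp
      then show ?thesis using QB(4)[of r "dual ?k ! t" 0 "bas ?k ! t"] by simp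
    qed
    then show ?thesis using LHS 0 by (simp add: rhomul_def)
  next
    case (Suc k0)
    let ?ks' = "ks[i := k0]"
    have "(\<Sum>r\<in>R g ks i. \<Sum>t<length (bas ?k). Q r (dual ?k ! t) (L 1 (bas ?k ! t)))
       = (\<Sum>r\<in>R g ks i. \<Sum>s<length (bas k0). Q r (L (-1) (dual k0 ! s)) (bas k0 ! s))"
      unfolding Suc by (intro sum.cong refl swap1) (use QB in auto)
    also have "\<dots> = rhomul i (dw (2*i) (Zg Y B vac bas dual g vs)) ey ew ks"
    proof -
      have "rhomul i (dw (2*i) (Zg Y B vac bas dual g vs)) ey ew ks
        = of_int (ew ! (2*i) + 1) * (\<Sum>js\<in>JS g ?ks'. Z0 Y B vac (vs @ W g ?ks' js) (ey @ ew[2*i := ew ! (2*i) + 1]))"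
        using Suc by (simp add: rhomul_def dw_def Zg_W)
      also have "\<dots> = of_int (ew ! (2*i) + 1) * (\<Sum>r\<in>R g ?ks' i. \<Sum>s<length (bas k0).
           Z0 Y B vac (vs @ W g ?ks' (r[i:=s])) (ey @ ew[2*i := ew ! (2*i) + 1]))"
        using JS_split[of i g ?ks' "\<lambda>js. Z0 Y B vac (vs @ W g ?ks' js) (ey @ ew[2*i := ew ! (2*i) + 1])"] ig lk by simp
      also have "\<dots> = (\<Sum>r\<in>R g ks i. \<Sum>s<length (bas k0). Q r (L (-1) (dual k0 ! s)) (bas k0 ! s))"
        unfolding R_upd[OF ig] sum_distrib_left
      proof (intro sum.cong refl)
        fix r s assume r: "r \<in> R g ks i"
        let ?us = "(vs @ W g ks r)[n + 2*i := dual k0 ! s, n + (2*i+1) := bas k0 ! s]"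
        have W': "vs @ W g ?ks' (r[i:=s]) = ?us"
          using Wr_eq[OF ig lk r, of k0 s] lv by (simp add: upd2_app)
        have p: "n + 2*i < length ?us" "length ?us = length ?es" using lens by auto
        have nth: "?us ! (n + 2*i) = dual k0 ! s" "?es ! (n + 2*i) = ew ! (2*i)"
          using lens ly by (auto simp: nth_append)
        have ees: "?es[n + 2*i := ?es ! (n + 2*i) + 1] = ey @ ew[2*i := ew ! (2*i) + 1]"
          using ly nth by (simp add: list_update_append)
        have "of_int (ew ! (2*i) + 1) * Z0 Y B vac (vs @ W g ?ks' (r[i:=s])) (ey @ ew[2*i := ew ! (2*i) + 1])
            = Z0 Y B vac (?us[n + 2*i := L (-1) (?us ! (n + 2*i))]) ?es"
          using Z0_deriv[OF p] W' nth ees by simp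
        also have "\<dots> = Q r (L (-1) (dual k0 ! s)) (bas k0 ! s)"
          by (simp only: nth(1) Q_def upd3)
        finally show "of_int (ew ! (2*i) + 1) * Z0 Y B vac (vs @ W g ?ks' (r[i:=s])) (ey @ ew[2*i := ew ! (2*i) + 1])
            = Q r (L (-1) (dual k0 ! s)) (bas k0 ! s)" .
      qed
      finally show ?thesis by simp
    qed
    finally show ?thesis using LHS by simp
  qed
qed

end

context voactx begin

lemma app_facts: assumes "length ey = n"
  shows "k < n \<Longrightarrow> (ey @ ew) ! k = ey ! k"
    and "k < n \<Longrightarrow> (ey @ ew)[k := x] = ey[k := x] @ ew"
    and "(ey @ ew) ! (n + j) = ew ! j"
    and "(ey @ ew)[n + j := x] = ey @ ew[j := x]"
  using assms by (auto simp: nth_append list_update_append)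

lemma perjs:
  assumes js: "js \<in> JS g ks" and lv: "length vs = n" and ly: "length ey = n" and lw: "length ew = 2 * g"
    and lk: "length ks = g" and lwt: "length wts = n" and hom: "\<forall>k<n. vs ! k \<in> V (wts ! k)"
  shows "(\<Sum>k<n. of_int (ey!k+1) * Z0 Y B vac (vs @ W g ks js) (ey[k:=ey!k+1] @ ew))
       + (\<Sum>j<2*g. of_int (ew!j+1) * Z0 Y B vac (vs @ W g ks js) (ey @ ew[j:=ew!j+1])) = 0"
    and "((\<Sum>k<n. of_nat (wts!k) + of_int (ey!k)) + (\<Sum>j<2*g. of_nat (ks!(j div 2)) + of_int (ew!j)))
          * Z0 Y B vac (vs @ W g ks js) (ey @ ew) = 0"
    and "(\<Sum>k<n. (2 * of_nat (wts!k) + of_int (ey!k) - 1) * Z0 Y B vac (vs @ W g ks js) (ey[k:=ey!k - 1] @ ew)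
             + Z0 Y B vac (vs[k := L 1 (vs!k)] @ W g ks js) (ey @ ew))
       + (\<Sum>j<2*g. (2 * of_nat (ks!(j div 2)) + of_int (ew!j) - 1) * Z0 Y B vac (vs @ W g ks js) (ey @ ew[j:=ew!j - 1])
             + Z0 Y B vac (vs @ (W g ks js)[j := L 1 (W g ks js ! j)]) (ey @ ew)) = 0"
proof -
  let ?us = "vs @ W g ks js" and ?es = "ey @ ew"
  let ?kk = "wts @ map (\<lambda>j. ks!(j div 2)) [0..<2*g]"
  have len: "length ?us = length ?es" "length ?us = n + 2*g" using lv ly lw by auto
  have kk: "?us ! i \<in> V (?kk ! i)" if "i < length ?us" for i
  proof (cases "i < n")
    case True then show ?thesis using hom lv lwt by (simp add: nth_append)
  next
    case False
    define j where "j = i - n"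
    have j: "i = n + j" "j < 2*g" using that len False unfolding j_def by auto
    then show ?thesis using W_V[OF js j(2)] lv lwt by (simp add: nth_append)
  qed
  have us1: "?us ! k = vs ! k" "?us[k := x] = vs[k := x] @ W g ks js" if "k < n" for k x
    using that lv by (auto simp: nth_append list_update_append)
  have us2: "?us ! (n + j) = W g ks js ! j" "?us[n + j := x] = vs @ (W g ks js)[j := x]" for j x
    using lv by (auto simp: nth_append list_update_append)
  have kk1: "?kk ! k = wts ! k" if "k < n" for k using that lwt by (simp add: nth_append)
  have kk2: "?kk ! (n + j) = ks ! (j div 2)" if "j < 2*g" for j using that lwt by (simp add: nth_append)
  note af = app_facts[OF ly]
  have "(\<Sum>i<n + 2*g. of_int (?es!i + 1) * Z0 Y B vac ?us (?es[i := ?es!i + 1])) = 0"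
    using Z0_m1[OF len(1)] unfolding len(2) .
  then have "(\<Sum>k<n. of_int (?es!k + 1) * Z0 Y B vac ?us (?es[k := ?es!k + 1]))
     + (\<Sum>j<2*g. of_int (?es!(n+j) + 1) * Z0 Y B vac ?us (?es[n+j := ?es!(n+j) + 1])) = 0"
    unfolding sum_split_add .
  moreover have "(\<Sum>k<n. of_int (?es!k + 1) * Z0 Y B vac ?us (?es[k := ?es!k + 1]))
      = (\<Sum>k<n. of_int (ey!k+1) * Z0 Y B vac ?us (ey[k:=ey!k+1] @ ew))"
    by (rule sum.cong) (auto simp: af)
  moreover have "(\<Sum>j<2*g. of_int (?es!(n+j) + 1) * Z0 Y B vac ?us (?es[n+j := ?es!(n+j) + 1]))
      = (\<Sum>j<2*g. of_int (ew!j+1) * Z0 Y B vac ?us (ey @ ew[j:=ew!j+1]))"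
    by (rule sum.cong) (auto simp: af)
  ultimately show "(\<Sum>k<n. of_int (ey!k+1) * Z0 Y B vac (vs @ W g ks js) (ey[k:=ey!k+1] @ ew))
       + (\<Sum>j<2*g. of_int (ew!j+1) * Z0 Y B vac (vs @ W g ks js) (ey @ ew[j:=ew!j+1])) = 0"
    by simp
  have "(\<Sum>i<n + 2*g. (of_nat (?kk!i) + of_int (?es!i)) * Z0 Y B vac ?us ?es) = 0"
    using Z0_0[OF len(1) kk] unfolding len(2) .
  then have "(\<Sum>k<n. (of_nat (?kk!k) + of_int (?es!k)) * Z0 Y B vac ?us ?es)
     + (\<Sum>j<2*g. (of_nat (?kk!(n+j)) + of_int (?es!(n+j))) * Z0 Y B vac ?us ?es) = 0"
    unfolding sum_split_add .
  moreover have "(\<Sum>k<n. (of_nat (?kk!k) + of_int (?es!k)) * Z0 Y B vac ?us ?es)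
      = (\<Sum>k<n. of_nat (wts!k) + of_int (ey!k)) * Z0 Y B vac ?us ?es"
    unfolding sum_distrib_right by (rule sum.cong) (auto simp: af kk1)
  moreover have "(\<Sum>j<2*g. (of_nat (?kk!(n+j)) + of_int (?es!(n+j))) * Z0 Y B vac ?us ?es)
      = (\<Sum>j<2*g. of_nat (ks!(j div 2)) + of_int (ew!j)) * Z0 Y B vac ?us ?es"
    unfolding sum_distrib_right by (rule sum.cong) (auto simp: af kk2)
  ultimately show "((\<Sum>k<n. of_nat (wts!k) + of_int (ey!k)) + (\<Sum>j<2*g. of_nat (ks!(j div 2)) + of_int (ew!j)))
          * Z0 Y B vac (vs @ W g ks js) (ey @ ew) = 0"
    by (simp add: distrib_right)
  have "(\<Sum>i<n + 2*g. (2 * of_nat (?kk!i) + of_int (?es!i) - 1) * Z0 Y B vac ?us (?es[i := ?es!i - 1])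
            + Z0 Y B vac (?us[i := L 1 (?us!i)]) ?es) = 0"
    using Z0_1[OF len(1) kk] unfolding len(2) .
  then have "(\<Sum>k<n. (2 * of_nat (?kk!k) + of_int (?es!k) - 1) * Z0 Y B vac ?us (?es[k := ?es!k - 1])
            + Z0 Y B vac (?us[k := L 1 (?us!k)]) ?es)
     + (\<Sum>j<2*g. (2 * of_nat (?kk!(n+j)) + of_int (?es!(n+j)) - 1) * Z0 Y B vac ?us (?es[n+j := ?es!(n+j) - 1])
            + Z0 Y B vac (?us[n+j := L 1 (?us!(n+j))]) ?es) = 0"
    unfolding sum_split_add .
  moreover have "(\<Sum>k<n. (2 * of_nat (?kk!k) + of_int (?es!k) - 1) * Z0 Y B vac ?us (?es[k := ?es!k - 1])
            + Z0 Y B vac (?us[k := L 1 (?us!k)]) ?es)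
      = (\<Sum>k<n. (2 * of_nat (wts!k) + of_int (ey!k) - 1) * Z0 Y B vac (vs @ W g ks js) (ey[k:=ey!k - 1] @ ew)
             + Z0 Y B vac (vs[k := L 1 (vs!k)] @ W g ks js) (ey @ ew))"
    by (rule sum.cong) (auto simp: af kk1 us1)
  moreover have "(\<Sum>j<2*g. (2 * of_nat (?kk!(n+j)) + of_int (?es!(n+j)) - 1) * Z0 Y B vac ?us (?es[n+j := ?es!(n+j) - 1])
            + Z0 Y B vac (?us[n+j := L 1 (?us!(n+j))]) ?es)
      = (\<Sum>j<2*g. (2 * of_nat (ks!(j div 2)) + of_int (ew!j) - 1) * Z0 Y B vac (vs @ W g ks js) (ey @ ew[j:=ew!j - 1])
             + Z0 Y B vac (vs @ (W g ks js)[j := L 1 (W g ks js ! j)]) (ey @ ew))"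
    by (rule sum.cong) (auto simp: af kk2 us2)
  ultimately show "(\<Sum>k<n. (2 * of_nat (wts!k) + of_int (ey!k) - 1) * Z0 Y B vac (vs @ W g ks js) (ey[k:=ey!k - 1] @ ew)
             + Z0 Y B vac (vs[k := L 1 (vs!k)] @ W g ks js) (ey @ ew))
       + (\<Sum>j<2*g. (2 * of_nat (ks!(j div 2)) + of_int (ew!j) - 1) * Z0 Y B vac (vs @ W g ks js) (ey @ ew[j:=ew!j - 1])
             + Z0 Y B vac (vs @ (W g ks js)[j := L 1 (W g ks js ! j)]) (ey @ ew)) = 0"
    by simp
qed

end

lemma lin2: "- ((w::complex) * z) - 2 * (k * z) - y * z - s * z = - ((s + y + 2 * k + w) * z)"
  by (simp add: algebra_simps)

lemma lin_help: "(a::complex) + b + z + (w + m + t) = 0 \<Longrightarrow> -(w+t) - m - a - b = z"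
  by (metis add.commute add.left_commute add_diff_cancel_left' diff_0 diff_diff_eq)
context voactx begin

lemma items:
  assumes lv: "length vs = n" and ly: "length ey = n" and lw: "length ew = 2 * g"
    and lk: "length ks = g" and lwt: "length wts = n" and hom: "\<forall>k<n. vs ! k \<in> V (wts ! k)"
  defines "Z \<equiv> Zg Y B vac bas dual g vs"
  shows "Lm1 g Z ey ew ks - (\<Sum>k<n. dy k Z ey ew ks) = 0"
    and "L0op g Z ey ew ks - (\<Sum>k<n. ydy k Z ey ew ks) - (\<Sum>k<n. of_nat (wts ! k)) * Z ey ew ks = 0"
    and "L1op g Z ey ew ks - (\<Sum>k<n. y2dy k Z ey ew ks)
          - (\<Sum>k<n. 2 * of_nat (wts ! k) * ymul k Z ey ew ks)
        = (\<Sum>k<n. Zg Y B vac bas dual g (vs[k := Lv Y om 1 (vs ! k)]) ey ew ks)"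
proof -
  note P = perjs[OF _ lv ly lw lk lwt hom]
  let ?J = "JS g ks"
  have Zd: "Z e1 e2 ks = (\<Sum>js\<in>?J. Z0 Y B vac (vs @ W g ks js) (e1 @ e2))" for e1 e2
    by (simp add: Z_def Zg_W)
  have dyS: "(\<Sum>k<n. dy k Z ey ew ks) = (\<Sum>js\<in>?J. \<Sum>k<n. of_int (ey!k+1) * Z0 Y B vac (vs @ W g ks js) (ey[k:=ey!k+1] @ ew))"
    by (simp only: dy_def Zd sum_distrib_left) (rule sum.swap)
  have dwS: "(\<Sum>j<2*g. dw j Z ey ew ks) = (\<Sum>js\<in>?J. \<Sum>j<2*g. of_int (ew!j+1) * Z0 Y B vac (vs @ W g ks js) (ey @ ew[j:=ew!j+1]))"
    by (simp only: dw_def Zd sum_distrib_left) (rule sum.swap)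
  have "(\<Sum>k<n. dy k Z ey ew ks) + (\<Sum>j<2*g. dw j Z ey ew ks) = 0"
    unfolding dyS dwS sum.distrib[symmetric] by (rule sum.neutral) (use P(1) in blast)
  then have "(\<Sum>k<n. dy k Z ey ew ks) = - (\<Sum>j<2*g. dw j Z ey ew ks)"
    by (simp add: eq_neg_iff_add_eq_0)
  then show "Lm1 g Z ey ew ks - (\<Sum>k<n. dy k Z ey ew ks) = 0"
    by (simp add: Lm1_def)
next
  note P = perjs[OF _ lv ly lw lk lwt hom]
  let ?J = "JS g ks"
  have Zd: "Z e1 e2 ks = (\<Sum>js\<in>?J. Z0 Y B vac (vs @ W g ks js) (e1 @ e2))" for e1 e2
    by (simp add: Z_def Zg_W)
  define C :: complex where "C = (\<Sum>k<n. of_nat (wts!k) + of_int (ey!k)) + (\<Sum>j<2*g. of_nat (ks!(j div 2)) + of_int (ew!j))"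
  have CZ: "C * Z ey ew ks = 0"
    unfolding Zd sum_distrib_left by (rule sum.neutral) (use P(2) in \<open>auto simp: C_def\<close>)
  have e4: "C = (\<Sum>k<n. of_nat (wts!k)) + (\<Sum>k<n. of_int (ey!k)) + 2 * (\<Sum>i<g. of_nat (ks!i)) + (\<Sum>j<2*g. of_int (ew!j))"
  proof -
    have p: "(\<Sum>j<2*g. of_nat (ks!(j div 2)) :: complex) = 2 * (\<Sum>i<g. of_nat (ks!i))"
    proof -
      have "(\<Sum>j<2*g. of_nat (ks!(j div 2)) :: complex) = (\<Sum>i<g. of_nat (ks!(2*i div 2)) + of_nat (ks!((2*i+1) div 2)))"
        by (rule sum_pairs)
      also have "\<dots> = (\<Sum>i<g. 2 * of_nat (ks!i))" by (rule sum.cong) auto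
      finally show ?thesis by (simp add: sum_distrib_left)
    qed
    show ?thesis using C_def p by (simp add: sum.distrib)
  qed
  have "L0op g Z ey ew ks - (\<Sum>k<n. ydy k Z ey ew ks) - (\<Sum>k<n. of_nat (wts ! k)) * Z ey ew ks
     = - (C * Z ey ew ks)"
  proof -
    have a1: "(\<Sum>j<2*g. wdw j Z ey ew ks) = (\<Sum>j<2*g. of_int (ew!j)) * Z ey ew ks"
      by (simp add: wdw_def sum_distrib_right)
    have a2: "(\<Sum>i<g. rhodrho i Z ey ew ks) = (\<Sum>i<g. of_nat (ks!i)) * Z ey ew ks"
      by (simp add: rhodrho_def sum_distrib_right)
    have a3: "(\<Sum>k<n. ydy k Z ey ew ks) = (\<Sum>k<n. of_int (ey!k)) * Z ey ew ks"
      by (simp add: ydy_def sum_distrib_right)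
    show ?thesis by (simp only: L0op_def a1 a2 a3 e4) (rule lin2)
  qed
  then show "L0op g Z ey ew ks - (\<Sum>k<n. ydy k Z ey ew ks) - (\<Sum>k<n. of_nat (wts ! k)) * Z ey ew ks = 0"
    using CZ by simp
next
  note P = perjs[OF _ lv ly lw lk lwt hom]
  let ?J = "JS g ks"
  have Zd: "Z e1 e2 ks = (\<Sum>js\<in>?J. Z0 Y B vac (vs @ W g ks js) (e1 @ e2))" for e1 e2
    by (simp add: Z_def Zg_W)
  define Yd where "Yd k = y2dy k Z ey ew ks" for k
  define Ym where "Ym k = ymul k Z ey ew ks" for k
  define Zk where "Zk k = Zg Y B vac bas dual g (vs[k := Lv Y om 1 (vs ! k)]) ey ew ks" for k
  define Wd where "Wd j = w2dw j Z ey ew ks" for j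
  define Wm where "Wm j = Z ey (ew[j := ew!j - 1]) ks" for j
  define Rh where "Rh j = rhomul (j div 2) (dw j Z) ey ew ks" for j
  define T where "T j = (\<Sum>js\<in>?J. Z0 Y B vac (vs @ (W g ks js)[j := L 1 (W g ks js ! j)]) (ey @ ew))" for j
  have SA: "(\<Sum>js\<in>?J. \<Sum>k<n. (2 * of_nat (wts!k) + of_int (ey!k) - 1) * Z0 Y B vac (vs @ W g ks js) (ey[k:=ey!k - 1] @ ew)
             + Z0 Y B vac (vs[k := L 1 (vs!k)] @ W g ks js) (ey @ ew))
      = (\<Sum>k<n. Yd k + 2 * of_nat (wts!k) * Ym k + Zk k)"
  proof -
    have "(\<Sum>js\<in>?J. \<Sum>k<n. (2 * of_nat (wts!k) + of_int (ey!k) - 1) * Z0 Y B vac (vs @ W g ks js) (ey[k:=ey!k - 1] @ ew)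
             + Z0 Y B vac (vs[k := L 1 (vs!k)] @ W g ks js) (ey @ ew))
       = (\<Sum>k<n. \<Sum>js\<in>?J. (2 * of_nat (wts!k) + of_int (ey!k) - 1) * Z0 Y B vac (vs @ W g ks js) (ey[k:=ey!k - 1] @ ew)
             + Z0 Y B vac (vs[k := L 1 (vs!k)] @ W g ks js) (ey @ ew))"
      by (rule sum.swap)
    also have "\<dots> = (\<Sum>k<n. Yd k + 2 * of_nat (wts!k) * Ym k + Zk k)"
    proof (rule sum.cong[OF refl])
      fix k
      show "(\<Sum>js\<in>?J. (2 * of_nat (wts!k) + of_int (ey!k) - 1) * Z0 Y B vac (vs @ W g ks js) (ey[k:=ey!k - 1] @ ew)
             + Z0 Y B vac (vs[k := L 1 (vs!k)] @ W g ks js) (ey @ ew)) = Yd k + 2 * of_nat (wts!k) * Ym k + Zk k"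
        unfolding sum.distrib sum_distrib_left[symmetric]
        by (simp add: Yd_def Ym_def Zk_def y2dy_def ymul_def Zd Zg_W algebra_simps)
    qed
    finally show ?thesis .
  qed
  have SB: "(\<Sum>js\<in>?J. \<Sum>j<2*g. (2 * of_nat (ks!(j div 2)) + of_int (ew!j) - 1) * Z0 Y B vac (vs @ W g ks js) (ey @ ew[j:=ew!j - 1])
             + Z0 Y B vac (vs @ (W g ks js)[j := L 1 (W g ks js ! j)]) (ey @ ew))
      = (\<Sum>j<2*g. Wd j + 2 * of_nat (ks!(j div 2)) * Wm j + T j)"
  proof -
    have "(\<Sum>js\<in>?J. \<Sum>j<2*g. (2 * of_nat (ks!(j div 2)) + of_int (ew!j) - 1) * Z0 Y B vac (vs @ W g ks js) (ey @ ew[j:=ew!j - 1])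
             + Z0 Y B vac (vs @ (W g ks js)[j := L 1 (W g ks js ! j)]) (ey @ ew))
       = (\<Sum>j<2*g. \<Sum>js\<in>?J. (2 * of_nat (ks!(j div 2)) + of_int (ew!j) - 1) * Z0 Y B vac (vs @ W g ks js) (ey @ ew[j:=ew!j - 1])
             + Z0 Y B vac (vs @ (W g ks js)[j := L 1 (W g ks js ! j)]) (ey @ ew))"
      by (rule sum.swap)
    also have "\<dots> = (\<Sum>j<2*g. Wd j + 2 * of_nat (ks!(j div 2)) * Wm j + T j)"
    proof (rule sum.cong[OF refl])
      fix j
      show "(\<Sum>js\<in>?J. (2 * of_nat (ks!(j div 2)) + of_int (ew!j) - 1) * Z0 Y B vac (vs @ W g ks js) (ey @ ew[j:=ew!j - 1])
             + Z0 Y B vac (vs @ (W g ks js)[j := L 1 (W g ks js ! j)]) (ey @ ew)) = Wd j + 2 * of_nat (ks!(j div 2)) * Wm j + T j"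
        unfolding sum.distrib sum_distrib_left[symmetric]
        by (simp add: Wd_def Wm_def T_def w2dw_def Zd algebra_simps)
    qed
    finally show ?thesis .
  qed
  have tot: "(\<Sum>k<n. Yd k + 2 * of_nat (wts!k) * Ym k + Zk k) + (\<Sum>j<2*g. Wd j + 2 * of_nat (ks!(j div 2)) * Wm j + T j) = 0"
    unfolding SA[symmetric] SB[symmetric] sum.distrib[symmetric] by (rule sum.neutral) (use P(3) in blast)
  have TR: "(\<Sum>j<2*g. T j) = (\<Sum>j<2*g. Rh j)"
  proof -
    have "(\<Sum>j<2*g. T j) = (\<Sum>i<g. T (2*i) + T (2*i+1))" by (rule sum_pairs)
    also have "\<dots> = (\<Sum>i<g. Rh (2*i+1) + Rh (2*i))"
    proof (rule sum.cong[OF refl])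
      fix i assume "i \<in> {..<g}"
      then have ig: "i < g" by simp
      show "T (2*i) + T (2*i+1) = Rh (2*i+1) + Rh (2*i)"
        unfolding T_def Rh_def Z_def
        using T_even[OF lv ly lw lk ig] T_odd[OF lv ly lw lk ig] by simp
    qed
    also have "\<dots> = (\<Sum>j<2*g. Rh j)" by (subst sum_pairs) (simp add: add.commute)
    finally show ?thesis .
  qed
  have WmP: "(\<Sum>j<2*g. 2 * of_nat (ks!(j div 2)) * Wm j)
      = 2 * (\<Sum>i<g. wmul (2*i) (rhodrho i Z) ey ew ks + wmul (2*i+1) (rhodrho i Z) ey ew ks)"
    unfolding sum_pairs sum_distrib_left
    by (rule sum.cong[OF refl]) (simp add: Wm_def wmul_def rhodrho_def algebra_simps)
  have L1e: "L1op g Z ey ew ks = - ((\<Sum>j<2*g. Wd j) + (\<Sum>j<2*g. Rh j))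
      - 2 * (\<Sum>i<g. wmul (2*i) (rhodrho i Z) ey ew ks + wmul (2*i+1) (rhodrho i Z) ey ew ks)"
    by (simp add: L1op_def Wd_def Rh_def sum.distrib)
  have "L1op g Z ey ew ks - (\<Sum>k<n. Yd k) - (\<Sum>k<n. 2 * of_nat (wts ! k) * Ym k) = (\<Sum>k<n. Zk k)"
  proof -
    have t1: "(\<Sum>k<n. Yd k) + (\<Sum>k<n. 2 * of_nat (wts!k) * Ym k) + (\<Sum>k<n. Zk k)
        + ((\<Sum>j<2*g. Wd j) + (\<Sum>j<2*g. 2 * of_nat (ks!(j div 2)) * Wm j) + (\<Sum>j<2*g. T j)) = 0"
      using tot by (simp only: sum.distrib)
    have t2: "L1op g Z ey ew ks = - ((\<Sum>j<2*g. Wd j) + (\<Sum>j<2*g. T j)) - (\<Sum>j<2*g. 2 * of_nat (ks!(j div 2)) * Wm j)"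
      by (simp only: L1e TR WmP)
    show ?thesis unfolding t2 by (rule lin_help[OF t1])
  qed
  then show "L1op g Z ey ew ks - (\<Sum>k<n. y2dy k Z ey ew ks)
          - (\<Sum>k<n. 2 * of_nat (wts ! k) * ymul k Z ey ew ks)
        = (\<Sum>k<n. Zg Y B vac bas dual g (vs[k := Lv Y om 1 (vs ! k)]) ey ew ks)"
    by (simp add: Yd_def Ym_def Zk_def)
qed

end


theorem mainTheorem7:
  fixes scale :: "complex \<Rightarrow> 'v::ab_group_add \<Rightarrow> 'v"
    and Y :: "'v \<Rightarrow> int \<Rightarrow> 'v \<Rightarrow> 'v"
    and vac om :: 'v and c :: complex
    and B :: "'v \<Rightarrow> 'v \<Rightarrow> complex"
    and bas dual :: "nat \<Rightarrow> 'v list"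
    and g n :: nat and vs :: "'v list" and wts :: "nat list"
  assumes voa: "is_VOA scale Y vac om c"
    and cft: "strong_CFT_type scale Y vac om"
    and simple: "simple_VOA scale Y"
    and sd: "self_dual scale Y om"
    and form: "invariant_form scale Y om B" and norm: "B vac vac = 1"
    and bases: "hom_dual_bases scale Y om B bas dual"
    and g1: "g \<ge> 1"
    and lens: "length vs = n" "length wts = n"
    and hom: "\<forall>k<n. vs ! k \<in> Vgr scale Y om (wts ! k)"
  shows "\<forall>ey ew ks. length ey = n \<and> length ew = 2 * g \<and> length ks = g \<longrightarrow>
     (let Z = Zg Y B vac bas dual g vs in
        Lm1 g Z ey ew ks - (\<Sum>k<n. dy k Z ey ew ks) = 0
      \<and> L0op g Z ey ew ks - (\<Sum>k<n. ydy k Z ey ew ks) - (\<Sum>k<n. of_nat (wts ! k)) * Z ey ew ks = 0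
      \<and> L1op g Z ey ew ks - (\<Sum>k<n. y2dy k Z ey ew ks)
          - (\<Sum>k<n. 2 * of_nat (wts ! k) * ymul k Z ey ew ks)
        = (\<Sum>k<n. Zg Y B vac bas dual g (vs[k := Lv Y om 1 (vs ! k)]) ey ew ks))"
proof -
  interpret voactx scale Y vac om c B bas dual
    by unfold_locales (rule voa cft form bases)+
  show ?thesis
  proof (intro allI impI)
    fix ey ew :: "int list" and ks :: "nat list" assume l: "length ey = n \<and> length ew = 2 * g \<and> length ks = g"
    then show "let Z = Zg Y B vac bas dual g vs in
        Lm1 g Z ey ew ks - (\<Sum>k<n. dy k Z ey ew ks) = 0
      \<and> L0op g Z ey ew ks - (\<Sum>k<n. ydy k Z ey ew ks) - (\<Sum>k<n. of_nat (wts ! k)) * Z ey ew ks = 0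
      \<and> L1op g Z ey ew ks - (\<Sum>k<n. y2dy k Z ey ew ks)
          - (\<Sum>k<n. 2 * of_nat (wts ! k) * ymul k Z ey ew ks)
        = (\<Sum>k<n. Zg Y B vac bas dual g (vs[k := Lv Y om 1 (vs ! k)]) ey ew ks)"
      using items[where ey=ey and ew=ew and ks=ks, OF lens(1) _ _ _ lens(2) hom] l unfolding Let_def by auto
  qed
qed

end
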